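(* Let $\alpha$ be a continuous $\|\cdot\|_1$-dominating normalized gauge norm and let $\mathcal{M}$ be a closed subspace of $H^{\alpha}$. Then $\mathcal{M}\cap H^\infty$ is weak*-closed in $H^\infty$.
   Context: $\mathbb T$ is the unit circle with normalized Lebesgue measure $m$. A norm $\alpha$ on $L^\infty$ is a $\|\cdot\|_1$-dominating normalized gauge norm if $\alpha(1)=1$, $\alpha(|f|)=\alpha(f)$ and $\alpha(f)\ge\|f\|_1$ for all $f\in L^\infty$; it is continuous if $\alpha(\chi_E)\to0$ as $m(E)\to0^+$. It is extended to measurable $f$ by $\alpha(f)=\sup\{\alpha(s): s\text{ simple},0\le s\le|f|\}$. $H^\alpha$ is the $\alpha$-closure of $H^\infty$. The weak* topology on $H^\infty\subset L^\infty=(L^1)^\#$ is the one induced by $L^1$. *)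

theory Defs
  imports "HOL-Analysis.Analysis"
begin

text \<open>The unit circle is parametrised by t \<mapsto> exp(2 pi i t), t in [0,1];
  normalised Lebesgue measure on the circle corresponds to Lebesgue measure on [0,1].
  Functions are represented by representatives f :: real \<Rightarrow> complex.\<close>

abbreviation circ_m :: "real measure" where
  "circ_m \<equiv> lebesgue_on {0..1}"

definition Linf :: "(real \<Rightarrow> complex) set" where
  "Linf = {f. f \<in> borel_measurable circ_m \<and> (\<exists>C. AE x in circ_m. norm (f x) \<le> C)}"

definition norm1 :: "(real \<Rightarrow> complex) \<Rightarrow> real" where
  "norm1 f = (\<integral>x. norm (f x) \<partial>circ_m)"

definition gauge_norm_dom :: "((real \<Rightarrow> complex) \<Rightarrow> real) \<Rightarrow> bool" where
  "gauge_norm_dom \<alpha> \<longleftrightarrow>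
     (\<forall>f\<in>Linf. \<forall>g\<in>Linf. (AE x in circ_m. f x = g x) \<longrightarrow> \<alpha> f = \<alpha> g)
   \<and> (\<forall>f\<in>Linf. \<forall>g\<in>Linf. \<alpha> (\<lambda>x. f x + g x) \<le> \<alpha> f + \<alpha> g)
   \<and> (\<forall>f\<in>Linf. \<forall>c::complex. \<alpha> (\<lambda>x. c * f x) = norm c * \<alpha> f)
   \<and> (\<forall>f\<in>Linf. \<alpha> f = 0 \<longleftrightarrow> (AE x in circ_m. f x = 0))
   \<and> \<alpha> (\<lambda>_. 1) = 1
   \<and> (\<forall>f\<in>Linf. \<alpha> (\<lambda>x. complex_of_real (norm (f x))) = \<alpha> f)
   \<and> (\<forall>f\<in>Linf. \<alpha> f \<ge> norm1 f)"

definition gauge_continuous :: "((real \<Rightarrow> complex) \<Rightarrow> real) \<Rightarrow> bool" where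
  "gauge_continuous \<alpha> \<longleftrightarrow>
     (\<forall>\<epsilon>>0. \<exists>\<delta>>0. \<forall>E\<in>sets circ_m. measure circ_m E < \<delta> \<longrightarrow> \<alpha> (indicator E) < \<epsilon>)"

definition alpha_ext :: "((real \<Rightarrow> complex) \<Rightarrow> real) \<Rightarrow> (real \<Rightarrow> complex) \<Rightarrow> ereal" where
  "alpha_ext \<alpha> f = Sup {ereal (\<alpha> (\<lambda>x. complex_of_real (s x))) | s :: real \<Rightarrow> real.
      simple_function circ_m s \<and> (\<forall>x\<in>space circ_m. 0 \<le> s x \<and> s x \<le> norm (f x))}"

definition Lalpha :: "((real \<Rightarrow> complex) \<Rightarrow> real) \<Rightarrow> (real \<Rightarrow> complex) set" where
  "Lalpha \<alpha> = {f. f \<in> borel_measurable circ_m \<and> alpha_ext \<alpha> f < \<infinity>}"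

text \<open>H-infinity: bounded functions whose negative Fourier coefficients vanish.\<close>
definition Hinf :: "(real \<Rightarrow> complex) set" where
  "Hinf = {f \<in> Linf. \<forall>n::nat. n \<ge> 1 \<longrightarrow>
            (\<integral>t. f t * cis (2 * pi * real n * t) \<partial>circ_m) = 0}"

definition Halpha :: "((real \<Rightarrow> complex) \<Rightarrow> real) \<Rightarrow> (real \<Rightarrow> complex) set" where
  "Halpha \<alpha> = {f \<in> Lalpha \<alpha>. \<forall>\<epsilon>>0. \<exists>h\<in>Hinf. alpha_ext \<alpha> (\<lambda>x. f x - h x) < ereal \<epsilon>}"

definition closed_subspace_Halpha ::
  "((real \<Rightarrow> complex) \<Rightarrow> real) \<Rightarrow> (real \<Rightarrow> complex) set \<Rightarrow> bool" where
  "closed_subspace_Halpha \<alpha> M \<longleftrightarrow>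
     M \<subseteq> Halpha \<alpha>
   \<and> (\<lambda>_. 0) \<in> M
   \<and> (\<forall>f\<in>M. \<forall>g\<in>M. (\<lambda>x. f x + g x) \<in> M)
   \<and> (\<forall>f\<in>M. \<forall>c::complex. (\<lambda>x. c * f x) \<in> M)
   \<and> (\<forall>f\<in>Halpha \<alpha>. (\<forall>\<epsilon>>0. \<exists>g\<in>M. alpha_ext \<alpha> (\<lambda>x. f x - g x) < ereal \<epsilon>) \<longrightarrow> f \<in> M)"

definition weak_star :: "(real \<Rightarrow> complex) topology" where
  "weak_star = topology_generated_by
     {{f \<in> Linf. (\<integral>x. f x * g x \<partial>circ_m) \<in> U} | g U.
        integrable circ_m g \<and> open (U :: complex set)}"

end

theory Submission
  imports Defs
begin


lemma space_circ[simp]: "space circ_m = {0..1}" by simp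

lemma Linf_I:
  assumes "f \<in> borel_measurable circ_m" "\<And>x. x \<in> {0..1} \<Longrightarrow> norm (f x) \<le> C"
  shows "f \<in> Linf"
  unfolding Linf_def using assms by (auto intro!: exI[of _ C] AE_I2)

lemma Linf_meas: "f \<in> Linf \<Longrightarrow> f \<in> borel_measurable circ_m"
  unfolding Linf_def by auto

lemma Linf_add: assumes "f \<in> Linf" "g \<in> Linf" shows "(\<lambda>x. f x + g x) \<in> Linf"
proof -
  obtain C where C: "AE x in circ_m. norm (f x) \<le> C" using assms(1) unfolding Linf_def by auto
  obtain D where D: "AE x in circ_m. norm (g x) \<le> D" using assms(2) unfolding Linf_def by auto
  have "AE x in circ_m. norm (f x + g x) \<le> C + D"
    using C D by eventually_elim (metis add_mono norm_triangle_ineq order_trans)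
  then show ?thesis using assms unfolding Linf_def by auto
qed

lemma Linf_cmult: assumes "f \<in> Linf" shows "(\<lambda>x. c * f x) \<in> Linf"
proof -
  obtain C where C: "AE x in circ_m. norm (f x) \<le> C" using assms(1) unfolding Linf_def by auto
  have "AE x in circ_m. norm (c * f x) \<le> norm c * C"
    using C by eventually_elim (simp add: norm_mult mult_left_mono)
  then show ?thesis using assms unfolding Linf_def by auto
qed

lemma Linf_bmult: assumes "f \<in> Linf" "u \<in> borel_measurable circ_m" "\<And>x. x \<in> {0..1} \<Longrightarrow> norm (u x) \<le> B"
  shows "(\<lambda>x. u x * f x) \<in> Linf"
proof -
  obtain C where C: "AE x in circ_m. norm (f x) \<le> C" using assms(1) unfolding Linf_def by auto
  have sp: "AE x in circ_m. x \<in> {0..1}" by (rule AE_I2) simp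
  have "AE x in circ_m. norm (u x * f x) \<le> B * C"
    using C sp
  proof eventually_elim
    case (elim x)
    have "norm (u x) \<le> B" using assms(3) elim(2) .
    then have "B \<ge> 0" using norm_ge_zero order_trans by blast
    then show ?case using elim \<open>norm (u x) \<le> B\<close> by (simp add: norm_mult mult_mono)
  qed
  moreover have "(\<lambda>x. u x * f x) \<in> borel_measurable circ_m" using assms Linf_meas by auto
  ultimately show ?thesis unfolding Linf_def by auto
qed

lemma Linf_diff: assumes "f \<in> Linf" "g \<in> Linf" shows "(\<lambda>x. f x - g x) \<in> Linf"
  using Linf_add[OF assms(1) Linf_cmult[OF assms(2), of "-1"]] by simp

lemma Linf_of_real_norm: assumes "f \<in> Linf" shows "(\<lambda>x. complex_of_real (norm (f x))) \<in> Linf"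
proof -
  obtain C where C: "AE x in circ_m. norm (f x) \<le> C" using assms unfolding Linf_def by auto
  have "AE x in circ_m. norm (complex_of_real (norm (f x))) \<le> C" using C by eventually_elim simp
  moreover have "(\<lambda>x. complex_of_real (norm (f x))) \<in> borel_measurable circ_m"
    using Linf_meas[OF assms] by simp
  ultimately show ?thesis unfolding Linf_def by blast
qed

lemma Linf_const: "(\<lambda>_. c) \<in> Linf"
  by (rule Linf_I[of _ "norm c"]) auto

context
  fixes \<alpha> :: "(real \<Rightarrow> complex) \<Rightarrow> real"
  assumes G: "gauge_norm_dom \<alpha>"
begin

lemma a_ae: "f \<in> Linf \<Longrightarrow> g \<in> Linf \<Longrightarrow> (AE x in circ_m. f x = g x) \<Longrightarrow> \<alpha> f = \<alpha> g"
  using G unfolding gauge_norm_dom_def by blast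
lemma a_sp: "f \<in> Linf \<Longrightarrow> g \<in> Linf \<Longrightarrow> (\<And>x. x \<in> {0..1} \<Longrightarrow> f x = g x) \<Longrightarrow> \<alpha> f = \<alpha> g"
  by (rule a_ae) (auto intro: AE_I2)
lemma a_tri: "f \<in> Linf \<Longrightarrow> g \<in> Linf \<Longrightarrow> \<alpha> (\<lambda>x. f x + g x) \<le> \<alpha> f + \<alpha> g"
  using G unfolding gauge_norm_dom_def by blast
lemma a_scale: "f \<in> Linf \<Longrightarrow> \<alpha> (\<lambda>x. c * f x) = norm c * \<alpha> f"
  using G unfolding gauge_norm_dom_def by blast
lemma a_zero: "f \<in> Linf \<Longrightarrow> \<alpha> f = 0 \<longleftrightarrow> (AE x in circ_m. f x = 0)"
  using G unfolding gauge_norm_dom_def by blast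
lemma a_one: "\<alpha> (\<lambda>_. 1) = 1"
  using G unfolding gauge_norm_dom_def by blast
lemma a_abs: "f \<in> Linf \<Longrightarrow> \<alpha> (\<lambda>x. complex_of_real (norm (f x))) = \<alpha> f"
  using G unfolding gauge_norm_dom_def by blast
lemma a_norm1: "f \<in> Linf \<Longrightarrow> \<alpha> f \<ge> norm1 f"
  using G unfolding gauge_norm_dom_def by blast
lemma a_nonneg: "f \<in> Linf \<Longrightarrow> \<alpha> f \<ge> 0"
  using a_norm1[of f] unfolding norm1_def by (smt (verit) integral_nonneg_AE AE_I2 norm_ge_zero)

lemma a_mono:
  assumes f: "f \<in> Linf" and g: "g \<in> Linf" and le: "\<And>x. x \<in> {0..1} \<Longrightarrow> norm (f x) \<le> norm (g x)"
  shows "\<alpha> f \<le> \<alpha> g"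
proof -
  define h where "h x = norm (f x) / norm (g x)" for x
  define u where "u x = Complex (h x) (sqrt (1 - (h x)\<^sup>2))" for x
  define Gg where "Gg x = complex_of_real (norm (g x))" for x
  have hm: "h \<in> borel_measurable circ_m" unfolding h_def using f g Linf_meas by auto
  have um: "u \<in> borel_measurable circ_m"
  proof -
    have "u = (\<lambda>x. complex_of_real (h x) + \<i> * complex_of_real (sqrt (1 - (h x)\<^sup>2)))"
      by (simp add: u_def Complex_eq fun_eq_iff)
    then show ?thesis using hm by simp
  qed
  have h01: "0 \<le> h x \<and> h x \<le> 1" if "x \<in> {0..1}" for x
    using le[OF that] unfolding h_def by (cases "norm (g x) = 0") (simp_all add: divide_le_eq_1)
  have unorm: "norm (u x) = 1" if "x \<in> {0..1}" for x
  proof -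
    have "(h x)\<^sup>2 \<le> 1" using h01[OF that] by (simp add: power_le_one)
    then show ?thesis unfolding u_def by (simp add: cmod_def)
  qed
  define w where "w x = Complex (h x) (- sqrt (1 - (h x)\<^sup>2))" for x
  have wm: "w \<in> borel_measurable circ_m"
  proof -
    have "w = (\<lambda>x. complex_of_real (h x) - \<i> * complex_of_real (sqrt (1 - (h x)\<^sup>2)))"
      by (simp add: w_def Complex_eq fun_eq_iff)
    then show ?thesis using hm by simp
  qed
  have ucnorm: "norm (w x) = 1" if "x \<in> {0..1}" for x
  proof -
    have "(h x)\<^sup>2 \<le> 1" using h01[OF that] by (simp add: power_le_one)
    then show ?thesis unfolding w_def by (simp add: cmod_def)
  qed
  have Ggl: "Gg \<in> Linf" unfolding Gg_def using Linf_of_real_norm[OF g] .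
  have a1: "(\<lambda>x. u x * Gg x) \<in> Linf" using Linf_bmult[OF Ggl um, of 1] unorm by auto
  have a2: "(\<lambda>x. w x * Gg x) \<in> Linf" using Linf_bmult[OF Ggl wm, of 1] ucnorm by auto
  have e1: "\<alpha> (\<lambda>x. u x * Gg x) = \<alpha> g"
  proof -
    have "\<alpha> (\<lambda>x. u x * Gg x) = \<alpha> (\<lambda>x. complex_of_real (norm (u x * Gg x)))" using a_abs[OF a1] by simp
    also have "\<dots> = \<alpha> Gg" by (rule a_sp[OF Linf_of_real_norm[OF a1] Ggl]) (auto simp: norm_mult unorm Gg_def)
    also have "\<dots> = \<alpha> g" unfolding Gg_def using a_abs[OF g] .
    finally show ?thesis .
  qed
  have e2: "\<alpha> (\<lambda>x. w x * Gg x) = \<alpha> g"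
  proof -
    have "\<alpha> (\<lambda>x. w x * Gg x) = \<alpha> (\<lambda>x. complex_of_real (norm (w x * Gg x)))" using a_abs[OF a2] by simp
    also have "\<dots> = \<alpha> Gg" by (rule a_sp[OF Linf_of_real_norm[OF a2] Ggl]) (auto simp: norm_mult ucnorm Gg_def)
    also have "\<dots> = \<alpha> g" unfolding Gg_def using a_abs[OF g] .
    finally show ?thesis .
  qed
  have b1: "(\<lambda>x. (1/2) * (u x * Gg x)) \<in> Linf" using Linf_cmult[OF a1] .
  have b2: "(\<lambda>x. (1/2) * (w x * Gg x)) \<in> Linf" using Linf_cmult[OF a2] .
  have "\<alpha> f = \<alpha> (\<lambda>x. complex_of_real (norm (f x)))" using a_abs[OF f] by simp
  also have "\<dots> = \<alpha> (\<lambda>x. (1/2) * (u x * Gg x) + (1/2) * (w x * Gg x))"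
  proof (rule a_sp)
    show "(\<lambda>x. complex_of_real (norm (f x))) \<in> Linf" using Linf_of_real_norm[OF f] .
    show "(\<lambda>x. (1/2) * (u x * Gg x) + (1/2) * (w x * Gg x)) \<in> Linf" using Linf_add[OF b1 b2] .
    fix x :: real assume x: "x \<in> {0..1}"
    have "(1/2) * (u x * Gg x) + (1/2) * (w x * Gg x) = complex_of_real (h x * norm (g x))"
      unfolding u_def w_def Gg_def by (simp add: complex_eq_iff)
    moreover have "h x * norm (g x) = norm (f x)" using le[OF x] unfolding h_def
      by (cases "norm (g x) = 0") auto
    ultimately show "complex_of_real (norm (f x)) = (1/2) * (u x * Gg x) + (1/2) * (w x * Gg x)" by simp
  qed
  also have "\<dots> \<le> \<alpha> (\<lambda>x. (1/2) * (u x * Gg x)) + \<alpha> (\<lambda>x. (1/2) * (w x * Gg x))"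
    using a_tri[OF b1 b2] .
  also have "\<dots> = \<alpha> g" using a_scale[OF a1, of "1/2"] a_scale[OF a2, of "1/2"] e1 e2 by simp
  finally show ?thesis .
qed

lemma a_const_bound:
  assumes f: "f \<in> Linf" and le: "\<And>x. x \<in> {0..1} \<Longrightarrow> norm (f x) \<le> C"
  shows "\<alpha> f \<le> C"
proof -
  have "norm (f 0) \<le> C" using le[of 0] by simp
  then have C0: "C \<ge> 0" by (meson norm_ge_zero order_trans)
  have "\<alpha> f \<le> \<alpha> (\<lambda>x. complex_of_real C * 1)" by (rule a_mono) (use f le C0 Linf_const in auto)
  also have "\<dots> = C" using a_scale[OF Linf_const[of 1], of "complex_of_real C"] a_one C0 by simp
  finally show ?thesis .
qed

end


abbreviation fadd :: "(real \<Rightarrow> complex) \<Rightarrow> (real \<Rightarrow> complex) \<Rightarrow> (real \<Rightarrow> complex)"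
  where "fadd f g \<equiv> (\<lambda>x. f x + g x)"
abbreviation fsc :: "real \<Rightarrow> (real \<Rightarrow> complex) \<Rightarrow> (real \<Rightarrow> complex)"
  where "fsc t f \<equiv> (\<lambda>x. complex_of_real t * f x)"

lemma cancel_of_real: "t \<noteq> 0 \<Longrightarrow> complex_of_real (1/t) * (complex_of_real t * z) = z"
  "t \<noteq> 0 \<Longrightarrow> complex_of_real t * (complex_of_real (1/t) * z) = z"
  by (simp_all add: mult.assoc[symmetric] of_real_mult[symmetric])

definition hbgood :: "(real \<Rightarrow> complex) set \<Rightarrow> ((real \<Rightarrow> complex) \<Rightarrow> real) \<Rightarrow>
   ((real \<Rightarrow> complex) \<times> real) set \<Rightarrow> ((real \<Rightarrow> complex) \<times> real) set \<Rightarrow> bool" where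
  "hbgood E p H0 H \<longleftrightarrow> H0 \<subseteq> H \<and> (\<forall>x a b. (x,a)\<in>H \<longrightarrow> (x,b)\<in>H \<longrightarrow> a = b)
    \<and> (\<forall>x a. (x,a)\<in>H \<longrightarrow> x \<in> E \<and> a \<le> p x)
    \<and> (\<forall>x a y b. (x,a)\<in>H \<longrightarrow> (y,b)\<in>H \<longrightarrow> (fadd x y, a+b) \<in> H)
    \<and> (\<forall>x a t. (x,a)\<in>H \<longrightarrow> (fsc t x, t*a) \<in> H)"

lemma hbgoodD:
  assumes "hbgood E p H0 H"
  shows "H0 \<subseteq> H" "\<And>x a b. (x,a)\<in>H \<Longrightarrow> (x,b)\<in>H \<Longrightarrow> a = b"
    "\<And>x a. (x,a)\<in>H \<Longrightarrow> x \<in> E" "\<And>x a. (x,a)\<in>H \<Longrightarrow> a \<le> p x"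
    "\<And>x a y b. (x,a)\<in>H \<Longrightarrow> (y,b)\<in>H \<Longrightarrow> (fadd x y, a+b) \<in> H"
    "\<And>x a t. (x,a)\<in>H \<Longrightarrow> (fsc t x, t*a) \<in> H"
  using assms unfolding hbgood_def by blast+

lemma hbgoodI:
  assumes "H0 \<subseteq> H" "\<And>x a b. (x,a)\<in>H \<Longrightarrow> (x,b)\<in>H \<Longrightarrow> a = b"
    "\<And>x a. (x,a)\<in>H \<Longrightarrow> x \<in> E" "\<And>x a. (x,a)\<in>H \<Longrightarrow> a \<le> p x"
    "\<And>x a y b. (x,a)\<in>H \<Longrightarrow> (y,b)\<in>H \<Longrightarrow> (fadd x y, a+b) \<in> H"
    "\<And>x a t. (x,a)\<in>H \<Longrightarrow> (fsc t x, t*a) \<in> H"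
  shows "hbgood E p H0 H"
  using assms unfolding hbgood_def by blast

lemma hb_chain:
  assumes good0: "hbgood E p H0 H0"
  shows "\<forall>C\<in>chains {H. hbgood E p H0 H}. \<exists>U\<in>{H. hbgood E p H0 H}. \<forall>X\<in>C. X \<subseteq> U"
proof
  fix C assume C: "C \<in> chains {H. hbgood E p H0 H}"
  show "\<exists>U\<in>{H. hbgood E p H0 H}. \<forall>X\<in>C. X \<subseteq> U"
  proof (cases "C = {}")
    case True then show ?thesis using good0 by auto
  next
    case False
    have CG: "\<And>H. H \<in> C \<Longrightarrow> hbgood E p H0 H" using C unfolding chains_def by auto
    have ch: "\<And>A B. A \<in> C \<Longrightarrow> B \<in> C \<Longrightarrow> A \<subseteq> B \<or> B \<subseteq> A"
      using C unfolding chains_def chain_subset_def by auto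
    have two: "\<exists>D\<in>C. u \<in> D \<and> v \<in> D" if uv: "u \<in> \<Union>C" "v \<in> \<Union>C" for u v
    proof -
      obtain A B where AB: "A \<in> C" "B \<in> C" "u \<in> A" "v \<in> B" using uv by auto
      from ch[OF AB(1,2)] show ?thesis
      proof
        assume "A \<subseteq> B" then show ?thesis using AB by blast
      next
        assume "B \<subseteq> A" then show ?thesis using AB by blast
      qed
    qed
    obtain C0 where C0: "C0 \<in> C" using False by auto
    have "hbgood E p H0 (\<Union>C)"
    proof (rule hbgoodI)
      show "H0 \<subseteq> \<Union>C" using hbgoodD(1)[OF CG[OF C0]] C0 by auto
    next
      fix x a b assume "(x, a) \<in> \<Union>C" "(x, b) \<in> \<Union>C"
      from two[OF this] obtain D where "D \<in> C" "(x,a) \<in> D" "(x,b) \<in> D" by auto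
      then show "a = b" using hbgoodD(2)[OF CG] by blast
    next
      fix x a assume "(x, a) \<in> \<Union>C"
      then obtain A where "A \<in> C" "(x,a) \<in> A" by auto
      then show "x \<in> E" "a \<le> p x" using hbgoodD(3,4)[OF CG] by blast+
    next
      fix x a y b assume "(x, a) \<in> \<Union>C" "(y, b) \<in> \<Union>C"
      from two[OF this] obtain D where D: "D \<in> C" "(x,a) \<in> D" "(y,b) \<in> D" by auto
      then have "(fadd x y, a + b) \<in> D" using hbgoodD(5)[OF CG[OF D(1)]] by blast
      then show "(fadd x y, a + b) \<in> \<Union>C" using D(1) by blast
    next
      fix x a t assume "(x, a) \<in> \<Union>C"
      then obtain A where A: "A \<in> C" "(x,a) \<in> A" by auto
      then have "(fsc t x, t * a) \<in> A" using hbgoodD(6)[OF CG[OF A(1)]] by blast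
      then show "(fsc t x, t * a) \<in> \<Union>C" using A(1) by blast
    qed
    then show ?thesis by blast
  qed
qed

lemma hb_extend:
  assumes E0: "\<And>f g. f \<in> E \<Longrightarrow> g \<in> E \<Longrightarrow> fadd f g \<in> E"
    and E1: "\<And>f t. f \<in> E \<Longrightarrow> fsc t f \<in> E"
    and p1: "\<And>f g. f \<in> E \<Longrightarrow> g \<in> E \<Longrightarrow> p (fadd f g) \<le> p f + p g"
    and p2: "\<And>f t. f \<in> E \<Longrightarrow> t \<ge> 0 \<Longrightarrow> p (fsc t f) = t * p f"
    and good: "hbgood E p H0 M" and ne: "M \<noteq> {}"
    and x0: "x0 \<in> E" "x0 \<notin> fst ` M"
  shows "\<exists>M'. hbgood E p H0 M' \<and> M \<subseteq> M' \<and> M' \<noteq> M"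
proof -
  have fnc: "\<And>x a b. (x,a)\<in>M \<Longrightarrow> (x,b)\<in>M \<Longrightarrow> a = b"
    and dom: "\<And>x a. (x,a)\<in>M \<Longrightarrow> x \<in> E \<and> a \<le> p x"
    and add: "\<And>x a y b. (x,a)\<in>M \<Longrightarrow> (y,b)\<in>M \<Longrightarrow> (fadd x y, a+b) \<in> M"
    and scl: "\<And>x a t. (x,a)\<in>M \<Longrightarrow> (fsc t x, t*a) \<in> M"
    and H0: "H0 \<subseteq> M"
    using hbgoodD[OF good] by blast+
  obtain y0 a0 where "(y0, a0) \<in> M" using ne by auto
  from scl[OF this, of 0] have zero: "((\<lambda>_. 0), 0) \<in> M" by simp
  define S1 where "S1 = {a - p (fadd y (fsc (-1) x0)) | y a. (y,a) \<in> M}"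
  have key: "a - p (fadd y (fsc (-1) x0)) \<le> p (fadd z x0) - b" if "(y,a)\<in>M" "(z,b)\<in>M" for y a z b
  proof -
    have "a + b \<le> p (fadd y z)" using dom[OF add[OF that]] by simp
    also have "fadd y z = fadd (fadd y (fsc (-1) x0)) (fadd z x0)" by (simp add: fun_eq_iff)
    also have "p \<dots> \<le> p (fadd y (fsc (-1) x0)) + p (fadd z x0)"
      by (rule p1[OF E0[OF conjunct1[OF dom[OF that(1)]] E1[OF x0(1)]] E0[OF conjunct1[OF dom[OF that(2)]] x0(1)]])
    finally show ?thesis by simp
  qed
  have S1ne: "S1 \<noteq> {}" using zero unfolding S1_def by blast
  have S1bdd: "bdd_above S1" unfolding S1_def bdd_above_def
    using key[OF _ zero] by blast
  define c where "c = Sup S1"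
  have c1: "a - p (fadd y (fsc (-1) x0)) \<le> c" if "(y,a)\<in>M" for y a
    unfolding c_def by (rule cSup_upper) (use that S1bdd in \<open>auto simp: S1_def\<close>)
  have c2: "c \<le> p (fadd z x0) - b" if "(z,b)\<in>M" for z b
    unfolding c_def by (rule cSup_least[OF S1ne]) (use key that in \<open>auto simp: S1_def\<close>)
  define M' where "M' = {(fadd y (fsc t x0), a + t * c) | y a t. (y,a) \<in> M}"
  have MM': "M \<subseteq> M'"
  proof
    fix z assume "z \<in> M"
    moreover obtain y a where "z = (y,a)" by force
    moreover have "(y,a) = (fadd y (fsc 0 x0), a + 0 * c)" by simp
    ultimately show "z \<in> M'" unfolding M'_def by blast
  qed
  have x0M': "(x0, c) \<in> M'"
    unfolding M'_def
    by (rule CollectI, rule exI[of _ "\<lambda>_. 0"], rule exI[of _ 0], rule exI[of _ 1]) (simp add: zero)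
  have "hbgood E p H0 M'"
    unfolding hbgood_def
  proof (intro conjI allI impI)
    show "H0 \<subseteq> M'" using H0 MM' by auto
  next
    fix x a b assume xa: "(x,a) \<in> M'" and xb: "(x,b) \<in> M'"
    from xa obtain y1 a1 t1 where 1: "(y1,a1)\<in>M" "x = fadd y1 (fsc t1 x0)" "a = a1 + t1 * c"
      unfolding M'_def by auto
    from xb obtain y2 a2 t2 where 2: "(y2,a2)\<in>M" "x = fadd y2 (fsc t2 x0)" "b = a2 + t2 * c"
      unfolding M'_def by auto
    have xeq: "fadd y1 (fsc t1 x0) = fadd y2 (fsc t2 x0)" using 1(2) 2(2) by simp
    have t: "t1 = t2"
    proof (rule ccontr)
      assume ne: "t1 \<noteq> t2"
      have "(fsc (1/(t2 - t1)) (fadd y1 (fsc (-1) y2)), (1/(t2-t1)) * (a1 + (-1) * a2)) \<in> M"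
        by (rule scl, rule add, rule 1, rule scl, rule 2)
      moreover have "fsc (1/(t2 - t1)) (fadd y1 (fsc (-1) y2)) = x0"
      proof
        fix s
        have "y1 s + t1 * x0 s = y2 s + t2 * x0 s" using fun_cong[OF xeq, of s] by simp
        then have "y1 s - y2 s = complex_of_real (t2 - t1) * x0 s" by (simp add: algebra_simps)
        then have "fsc (1/(t2 - t1)) (fadd y1 (fsc (-1) y2)) s =
            complex_of_real (1/(t2 - t1)) * (complex_of_real (t2 - t1) * x0 s)" by simp
        also have "\<dots> = x0 s" using ne by (simp add: cancel_of_real)
        finally show "fsc (1/(t2 - t1)) (fadd y1 (fsc (-1) y2)) s = x0 s" .
      qed
      ultimately have "x0 \<in> fst ` M" by force
      then show False using x0 by simp
    qed
    have "y1 = y2"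
    proof
      fix s show "y1 s = y2 s" using fun_cong[OF xeq, of s] t by simp
    qed
    then have "a1 = a2" using fnc 1(1) 2(1) by blast
    then show "a = b" using 1 2 t by simp
  next
    fix x a assume "(x,a) \<in> M'"
    then obtain y b t where yb: "(y,b)\<in>M" "x = fadd y (fsc t x0)" "a = b + t * c"
      unfolding M'_def by auto
    show "x \<in> E" using yb(2) E0[OF conjunct1[OF dom[OF yb(1)]] E1[OF x0(1)]] by simp
    show "a \<le> p x"
    proof (cases t "0::real" rule: linorder_cases)
      case equal then show ?thesis using yb dom by simp
    next
      case greater
      define P where "P = p (fadd (fsc (1/t) y) x0)"
      have m: "(fsc (1/t) y, (1/t) * b) \<in> M" using scl[OF yb(1)] .
      have h1: "c \<le> P - (1/t) * b" using c2[OF m] unfolding P_def .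
      have "t * P = p (fsc t (fadd (fsc (1/t) y) x0))" unfolding P_def
        by (rule p2[symmetric, OF E0[OF E1[OF conjunct1[OF dom[OF yb(1)]]] x0(1)]]) (use greater in auto)
      also have "fsc t (fadd (fsc (1/t) y) x0) = x"
      proof
        fix r show "fsc t (fadd (fsc (1/t) y) x0) r = x r"
          using greater yb(2) by (simp add: distrib_left cancel_of_real)
      qed
      finally have h2: "t * P = p x" .
      have "t * c \<le> t * (P - (1/t) * b)" using h1 greater by (simp add: mult_left_mono)
      then have "t * c \<le> t * P - b" using greater by (simp add: right_diff_distrib)
      then show ?thesis using h2 yb(3) by simp
    next
      case less
      define s where "s = - t"
      have s: "s > 0" using less s_def by simp
      define P where "P = p (fadd (fsc (1/s) y) (fsc (-1) x0))"
      have m: "(fsc (1/s) y, (1/s) * b) \<in> M" using scl[OF yb(1)] .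
      have h1: "(1/s) * b - P \<le> c" using c1[OF m] unfolding P_def .
      have "s * P = p (fsc s (fadd (fsc (1/s) y) (fsc (-1) x0)))" unfolding P_def
        by (rule p2[symmetric, OF E0[OF E1[OF conjunct1[OF dom[OF yb(1)]]] E1[OF x0(1)]]]) (use s in auto)
      also have "fsc s (fadd (fsc (1/s) y) (fsc (-1) x0)) = x"
      proof
        fix r
        have "x r = y r - complex_of_real s * x0 r" using yb(2) s_def by simp
        moreover have "fsc s (fadd (fsc (1/s) y) (fsc (-1) x0)) r =
           complex_of_real s * (complex_of_real (1/s) * y r) - complex_of_real s * x0 r"
          by (simp add: algebra_simps)
        ultimately show "fsc s (fadd (fsc (1/s) y) (fsc (-1) x0)) r = x r"
          using s cancel_of_real(2)[of s "y r"] by simp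
      qed
      finally have h2: "s * P = p x" .
      have "s * ((1/s) * b - P) \<le> s * c" using h1 s by (simp add: mult_left_mono)
      then have "b - s * P \<le> s * c" using s by (simp add: right_diff_distrib)
      then show ?thesis using h2 yb(3) s_def by simp
    qed
  next
    fix x a y b assume "(x,a) \<in> M'" "(y,b) \<in> M'"
    then obtain x1 a1 t1 y1 b1 t2 where 1: "(x1,a1)\<in>M" "x = fadd x1 (fsc t1 x0)" "a = a1 + t1 * c"
      and 2: "(y1,b1)\<in>M" "y = fadd y1 (fsc t2 x0)" "b = b1 + t2 * c"
      unfolding M'_def by auto
    have "(fadd (fadd x1 y1) (fsc (t1+t2) x0), (a1 + b1) + (t1+t2) * c) \<in> M'"
      unfolding M'_def
      by (rule CollectI, rule exI[of _ "fadd x1 y1"], rule exI[of _ "a1+b1"], rule exI[of _ "t1+t2"])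
        (simp add: add[OF 1(1) 2(1)])
    moreover have "fadd (fadd x1 y1) (fsc (t1+t2) x0) = fadd x y"
      using 1 2 by (simp add: fun_eq_iff algebra_simps)
    moreover have "(a1 + b1) + (t1+t2) * c = a + b" using 1 2 by (simp add: algebra_simps)
    ultimately show "(fadd x y, a + b) \<in> M'" by simp
  next
    fix x a t assume "(x,a) \<in> M'"
    then obtain y b s where 1: "(y,b)\<in>M" "x = fadd y (fsc s x0)" "a = b + s * c"
      unfolding M'_def by auto
    have "(fadd (fsc t y) (fsc (t * s) x0), t * b + (t * s) * c) \<in> M'"
      unfolding M'_def
      by (rule CollectI, rule exI[of _ "fsc t y"], rule exI[of _ "t * b"], rule exI[of _ "t * s"])
        (simp add: scl[OF 1(1)])
    moreover have "fadd (fsc t y) (fsc (t * s) x0) = fsc t x"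
      using 1 by (simp add: fun_eq_iff algebra_simps)
    moreover have "t * b + (t * s) * c = t * a" using 1 by (simp add: algebra_simps)
    ultimately show "(fsc t x, t * a) \<in> M'" by simp
  qed
  moreover have "M' \<noteq> M" using x0M' x0 by force
  ultimately show ?thesis using MM' by blast
qed

theorem hahn_banach_fun:
  assumes E0: "\<And>f g. f \<in> E \<Longrightarrow> g \<in> E \<Longrightarrow> fadd f g \<in> E"
    and E1: "\<And>f t. f \<in> E \<Longrightarrow> fsc t f \<in> E"
    and p1: "\<And>f g. f \<in> E \<Longrightarrow> g \<in> E \<Longrightarrow> p (fadd f g) \<le> p f + p g"
    and p2: "\<And>f t. f \<in> E \<Longrightarrow> t \<ge> 0 \<Longrightarrow> p (fsc t f) = t * p f"
    and good0: "hbgood E p H0 H0" and ne: "H0 \<noteq> {}"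
  shows "\<exists>\<psi>. (\<forall>f\<in>E. \<forall>g\<in>E. \<psi> (fadd f g) = \<psi> f + \<psi> g) \<and> (\<forall>f\<in>E. \<forall>t. \<psi> (fsc t f) = t * \<psi> f)
     \<and> (\<forall>f\<in>E. \<psi> f \<le> p f) \<and> (\<forall>x a. (x,a) \<in> H0 \<longrightarrow> \<psi> x = a)"
proof -
  obtain M where M: "M \<in> {H. hbgood E p H0 H}" and max: "\<forall>X\<in>{H. hbgood E p H0 H}. M \<subseteq> X \<longrightarrow> X = M"
    using Zorn_Lemma2[OF hb_chain[OF good0]] by blast
  have good: "hbgood E p H0 M" using M by simp
  have fnc: "\<And>x a b. (x,a)\<in>M \<Longrightarrow> (x,b)\<in>M \<Longrightarrow> a = b"
    and dom: "\<And>x a. (x,a)\<in>M \<Longrightarrow> x \<in> E \<and> a \<le> p x"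
    and add: "\<And>x a y b. (x,a)\<in>M \<Longrightarrow> (y,b)\<in>M \<Longrightarrow> (fadd x y, a+b) \<in> M"
    and scl: "\<And>x a t. (x,a)\<in>M \<Longrightarrow> (fsc t x, t*a) \<in> M"
    and H0: "H0 \<subseteq> M"
    using hbgoodD[OF good] by blast+
  have Mne: "M \<noteq> {}" using ne H0 by auto
  have full: "x \<in> fst ` M" if "x \<in> E" for x
  proof (rule ccontr)
    assume "x \<notin> fst ` M"
    from hb_extend[OF E0 E1 p1 p2 good Mne that this] obtain M' where
      "hbgood E p H0 M'" "M \<subseteq> M'" "M' \<noteq> M" by blast
    then show False using max by blast
  qed
  define \<psi> where "\<psi> x = (THE a. (x,a) \<in> M)" for x
  have psi: "(x, \<psi> x) \<in> M" if xE: "x \<in> E" for x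
  proof -
    obtain a where a: "(x,a) \<in> M" using full[OF xE] by force
    have "\<psi> x = a" unfolding \<psi>_def by (rule the_equality[where P="\<lambda>b. (x,b) \<in> M", OF a]) (use fnc a in blast)
    then show ?thesis using a by simp
  qed
  have psiv: "\<psi> x = a" if "(x,a) \<in> M" for x a
    unfolding \<psi>_def by (rule the_equality[where P="\<lambda>b. (x,b) \<in> M", OF that]) (use fnc that in blast)
  show ?thesis
  proof (intro exI[of _ \<psi>] conjI ballI allI impI)
    fix f g assume "f \<in> E" "g \<in> E"
    then show "\<psi> (fadd f g) = \<psi> f + \<psi> g" using psiv[OF add[OF psi psi]] by blast
  next
    fix f t assume "f \<in> E"
    then show "\<psi> (fsc t f) = t * \<psi> f" using psiv[OF scl[OF psi]] by blast
  next
    fix f assume "f \<in> E"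
    then show "\<psi> f \<le> p f" using dom[OF psi] by blast
  next
    fix x a assume "(x,a) \<in> H0"
    then show "\<psi> x = a" using psiv H0 by blast
  qed
qed


lemma circ_finite: "finite_measure circ_m"
  by (rule finite_measure_lebesgue_on) simp

locale signed_fa =
  fixes \<nu> :: "real set \<Rightarrow> real" and K :: real
  assumes add: "\<And>A B. A \<in> sets circ_m \<Longrightarrow> B \<in> sets circ_m \<Longrightarrow> A \<inter> B = {} \<Longrightarrow> \<nu> (A \<union> B) = \<nu> A + \<nu> B"
    and bdd: "\<And>A. A \<in> sets circ_m \<Longrightarrow> \<bar>\<nu> A\<bar> \<le> K"
    and small: "\<And>\<epsilon>. \<epsilon> > 0 \<Longrightarrow> \<exists>\<delta>>0. \<forall>A\<in>sets circ_m. measure circ_m A < \<delta> \<longrightarrow> \<bar>\<nu> A\<bar> < \<epsilon>"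
begin

lemma nu_empty: "\<nu> {} = 0"
  using add[of "{}" "{}"] by simp

definition P :: "real set \<Rightarrow> real" where
  "P A = Sup {\<nu> B |B. B \<in> sets circ_m \<and> B \<subseteq> A}"

lemma P_upper: "B \<in> sets circ_m \<Longrightarrow> B \<subseteq> A \<Longrightarrow> \<nu> B \<le> P A"
  unfolding P_def
proof (rule cSup_upper)
  show "bdd_above {\<nu> B |B. B \<in> sets circ_m \<and> B \<subseteq> A}"
    by (rule bdd_aboveI[where M=K]) (use bdd abs_le_D1 in blast)
qed auto

lemma P_least: "(\<And>B. B \<in> sets circ_m \<Longrightarrow> B \<subseteq> A \<Longrightarrow> \<nu> B \<le> c) \<Longrightarrow> P A \<le> c"
  unfolding P_def by (rule cSup_least) auto

lemma P_nonneg: "0 \<le> P A"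
  using P_upper[of "{}" A] nu_empty by simp

lemma P_empty: "P {} = 0"
  using P_nonneg[of "{}"] P_least[of "{}" 0] nu_empty by force

lemma P_add:
  assumes A: "A \<in> sets circ_m" and B: "B \<in> sets circ_m" and d: "A \<inter> B = {}"
  shows "P (A \<union> B) = P A + P B"
proof (rule antisym)
  show "P (A \<union> B) \<le> P A + P B"
  proof (rule P_least)
    fix C assume C: "C \<in> sets circ_m" "C \<subseteq> A \<union> B"
    have "C = (C \<inter> A) \<union> (C \<inter> B)" using C by auto
    then have "\<nu> C = \<nu> (C \<inter> A) + \<nu> (C \<inter> B)" using add[of "C \<inter> A" "C \<inter> B"] C A B d by auto
    also have "\<dots> \<le> P A + P B" using P_upper[of "C \<inter> A" A] P_upper[of "C \<inter> B" B] C A B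
      by (intro add_mono) auto
    finally show "\<nu> C \<le> P A + P B" .
  qed
next
  have "P A \<le> P (A \<union> B) - P B"
  proof (rule P_least)
    fix C1 assume C1: "C1 \<in> sets circ_m" "C1 \<subseteq> A"
    have "P B \<le> P (A \<union> B) - \<nu> C1"
    proof (rule P_least)
      fix C2 assume C2: "C2 \<in> sets circ_m" "C2 \<subseteq> B"
      have "C1 \<inter> C2 = {}" using C1 C2 d by blast
      then have "\<nu> C1 + \<nu> C2 = \<nu> (C1 \<union> C2)" using add[OF C1(1) C2(1)] by simp
      also have "\<dots> \<le> P (A \<union> B)" using C1 C2 by (intro P_upper) auto
      finally show "\<nu> C2 \<le> P (A \<union> B) - \<nu> C1" by simp
    qed
    then show "\<nu> C1 \<le> P (A \<union> B) - P B" by simp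
  qed
  then show "P A + P B \<le> P (A \<union> B)" by simp
qed

lemma P_small:
  assumes "\<epsilon> > 0"
  shows "\<exists>\<delta>>0. \<forall>A\<in>sets circ_m. measure circ_m A < \<delta> \<longrightarrow> P A \<le> \<epsilon>"
proof -
  obtain \<delta> where d: "\<delta> > 0" "\<forall>A\<in>sets circ_m. measure circ_m A < \<delta> \<longrightarrow> \<bar>\<nu> A\<bar> < \<epsilon>"
    using small[OF assms] by blast
  have "P A \<le> \<epsilon>" if A: "A \<in> sets circ_m" "measure circ_m A < \<delta>" for A
  proof (rule P_least)
    fix B assume B: "B \<in> sets circ_m" "B \<subseteq> A"
    have "measure circ_m B \<le> measure circ_m A"
      using finite_measure.finite_measure_mono[OF circ_finite B(2) A(1)] .
    then have "\<bar>\<nu> B\<bar> < \<epsilon>" using d B A by auto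
    then show "\<nu> B \<le> \<epsilon>" by simp
  qed
  then show ?thesis using d(1) by blast
qed

lemma P_null: assumes "A \<in> sets circ_m" "measure circ_m A = 0" shows "P A = 0"
proof -
  have "P A \<le> e" if e: "e > 0" for e
  proof -
    obtain d where "d > 0" "\<forall>A\<in>sets circ_m. measure circ_m A < d \<longrightarrow> P A \<le> e"
      using P_small[OF e] by blast
    then show ?thesis using assms by auto
  qed
  then have "P A \<le> 0" by (meson dense not_le)
  then show ?thesis using P_nonneg[of A] by simp
qed

lemma P_sums:
  assumes F: "range F \<subseteq> sets circ_m" and dj: "disjoint_family F"
  shows "(\<lambda>i. P (F i)) sums P (\<Union>i. F i)"
proof -
  define T where "T n = (\<Union>i. F (i + n))" for n
  have Tm: "T n \<in> sets circ_m" for n unfolding T_def using F by auto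
  have Tsplit: "T n = F n \<union> T (Suc n)" for n
  proof
    show "T n \<subseteq> F n \<union> T (Suc n)"
    proof
      fix x assume "x \<in> T n"
      then obtain i where i: "x \<in> F (i + n)" unfolding T_def by auto
      show "x \<in> F n \<union> T (Suc n)"
      proof (cases i)
        case 0 then show ?thesis using i by simp
      next
        case (Suc j) then show ?thesis using i unfolding T_def by (auto intro!: exI[of _ j])
      qed
    qed
    have "F n \<subseteq> T n" unfolding T_def using UN_upper[of 0 UNIV "\<lambda>i. F (i+n)"] by simp
    moreover have "F (i + Suc n) \<subseteq> T n" for i
      unfolding T_def using UN_upper[of "Suc i" UNIV "\<lambda>i. F (i+n)"] by simp
    then have "T (Suc n) \<subseteq> T n" unfolding T_def[of "Suc n"] by (rule UN_least)
    ultimately show "F n \<union> T (Suc n) \<subseteq> T n" by (rule Un_least)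
  qed
  have Tdj: "F n \<inter> T (Suc n) = {}" for n
  proof -
    have "F n \<inter> F (i + Suc n) = {}" for i using dj unfolding disjoint_family_on_def by auto
    then show ?thesis unfolding T_def by auto
  qed
  have T0: "T 0 = (\<Union>i. F i)" unfolding T_def by simp
  have eq: "P (\<Union>i. F i) = (\<Sum>i<n. P (F i)) + P (T n)" for n
  proof (induction n)
    case 0 then show ?case using T0 by simp
  next
    case (Suc n)
    have "P (T n) = P (F n) + P (T (Suc n))"
      using P_add[OF _ Tm Tdj[of n]] F Tsplit[of n] by auto
    then show ?case using Suc by simp
  qed
  have anti: "decseq T"
    by (rule decseq_SucI) (use Tsplit in blast)
  have Tempty: "(\<Inter> (range T)) = {}"
  proof -
    show ?thesis
    proof (rule equals0I)
      fix x assume x: "x \<in> \<Inter> (range T)"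
      then have "x \<in> T 0" by auto
      then obtain i where "x \<in> F i" unfolding T_def by auto
      moreover have "x \<in> T (Suc i)" using x by auto
      ultimately show False using Tdj[of i] by auto
    qed
  qed
  have mT: "(\<lambda>n. measure circ_m (T n)) \<longlonglongrightarrow> 0"
    using finite_measure.finite_Lim_measure_decseq[OF circ_finite _ anti] Tm Tempty by auto
  have PT: "(\<lambda>n. P (T n)) \<longlonglongrightarrow> 0"
  proof (rule LIMSEQ_I)
    fix r :: real assume r: "r > 0"
    obtain \<delta> where d: "\<delta> > 0" "\<forall>A\<in>sets circ_m. measure circ_m A < \<delta> \<longrightarrow> P A \<le> r/2"
      using P_small[of "r/2"] r by auto
    obtain no where no: "\<forall>n\<ge>no. norm (measure circ_m (T n) - 0) < \<delta>"
      using LIMSEQ_D[OF mT d(1)] by blast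
    have "norm (P (T n) - 0) < r" if "n \<ge> no" for n
    proof -
      have "measure circ_m (T n) < \<delta>" using no that by simp
      then have "P (T n) \<le> r/2" using d Tm by blast
      then show ?thesis using P_nonneg[of "T n"] r by simp
    qed
    then show "\<exists>no. \<forall>n\<ge>no. norm (P (T n) - 0) < r" by blast
  qed
  have "(\<lambda>n. P (\<Union>i. F i) - P (T n)) \<longlonglongrightarrow> P (\<Union>i. F i) - 0"
    by (intro tendsto_intros PT)
  moreover have "(\<lambda>n. P (\<Union>i. F i) - P (T n)) = (\<lambda>n. \<Sum>i<n. P (F i))"
  proof
    fix n show "P (\<Union>i. F i) - P (T n) = (\<Sum>i<n. P (F i))" using eq[of n] by linarith
  qed
  ultimately show ?thesis unfolding sums_def by simp
qed


lemma P_density: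
  "\<exists>k. integrable circ_m k \<and> (\<forall>A\<in>sets circ_m. P A = (\<integral>x. indicator A x * k x \<partial>circ_m))"
proof -
  interpret fm: finite_measure circ_m by (rule circ_finite)
  define \<mu> where "\<mu> A = ennreal (P A)" for A
  have sa: "sigma_algebra (space circ_m) (sets circ_m)" by (rule sets.sigma_algebra_axioms)
  have pos: "positive (sets circ_m) \<mu>" unfolding positive_def \<mu>_def using P_empty by simp
  have ca: "countably_additive (sets circ_m) \<mu>" unfolding countably_additive_def
  proof (intro allI impI)
    fix F :: "nat \<Rightarrow> real set" assume F: "range F \<subseteq> sets circ_m" "disjoint_family F"
    have s: "(\<lambda>i. P (F i)) sums P (\<Union>i. F i)" by (rule P_sums[OF F])
    have "(\<Sum>i. \<mu> (F i)) = ennreal (\<Sum>i. P (F i))" unfolding \<mu>_def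
      by (rule suminf_ennreal2) (use P_nonneg sums_summable[OF s] in auto)
    also have "(\<Sum>i. P (F i)) = P (\<Union>i. F i)" using s by (simp add: sums_iff)
    finally show "(\<Sum>i. \<mu> (F i)) = \<mu> (\<Union> (range F))" unfolding \<mu>_def by simp
  qed
  define N where "N = measure_of (space circ_m) (sets circ_m) \<mu>"
  have emN: "emeasure N A = ennreal (P A)" if "A \<in> sets circ_m" for A
    unfolding N_def using emeasure_measure_of_sigma[OF sa pos ca that] unfolding \<mu>_def by simp
  have setsN: "sets N = sets circ_m" unfolding N_def by (rule sets.sets_measure_of_eq)
  have ac: "absolutely_continuous circ_m N" unfolding absolutely_continuous_def
  proof
    fix A assume A: "A \<in> null_sets circ_m"
    then have "A \<in> sets circ_m" "measure circ_m A = 0" by (auto simp: null_setsD1 measure_def)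
    then have "emeasure N A = 0" using emN P_null by simp
    then show "A \<in> null_sets N" using setsN \<open>A \<in> sets circ_m\<close> by (simp add: null_sets_def)
  qed
  obtain f where fm: "f \<in> borel_measurable circ_m" and dens: "density circ_m f = N"
    using fm.Radon_Nikodym[OF ac setsN] by blast
  have fA: "(\<integral>\<^sup>+x. f x * indicator A x \<partial>circ_m) = ennreal (P A)" if "A \<in> sets circ_m" for A
    using emeasure_density[OF fm that] dens emN[OF that] by simp
  have "(\<integral>\<^sup>+x. f x \<partial>circ_m) = (\<integral>\<^sup>+x. f x * indicator (space circ_m) x \<partial>circ_m)"
    by (rule nn_integral_cong) simp
  also have "\<dots> = ennreal (P (space circ_m))" using fA[of "space circ_m"] by simp
  finally have fint: "(\<integral>\<^sup>+x. f x \<partial>circ_m) \<noteq> \<infinity>" by simp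
  have fin: "AE x in circ_m. f x \<noteq> \<infinity>" by (rule nn_integral_PInf_AE[OF fm fint])
  define k where "k x = enn2real (f x)" for x
  have km: "k \<in> borel_measurable circ_m" unfolding k_def using fm by simp
  have kf: "AE x in circ_m. ennreal (k x) = f x"
    using fin by eventually_elim (simp add: k_def ennreal_enn2real top.not_eq_extremum)
  have kint: "integrable circ_m k"
  proof (rule integrableI_nonneg[OF km])
    show "AE x in circ_m. 0 \<le> k x" unfolding k_def by simp
    have "(\<integral>\<^sup>+x. ennreal (k x) \<partial>circ_m) = (\<integral>\<^sup>+x. f x \<partial>circ_m)"
      by (rule nn_integral_cong_AE[OF kf])
    then show "(\<integral>\<^sup>+x. ennreal (k x) \<partial>circ_m) < \<infinity>" using fint by (simp add: top.not_eq_extremum)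
  qed
  have "P A = (\<integral>x. indicator A x * k x \<partial>circ_m)" if A: "A \<in> sets circ_m" for A
  proof -
    have "(\<integral>x. indicator A x * k x \<partial>circ_m) = enn2real (\<integral>\<^sup>+x. ennreal (indicator A x * k x) \<partial>circ_m)"
    proof (rule integral_eq_nn_integral)
      show "(\<lambda>x. indicator A x * k x) \<in> borel_measurable circ_m"
        using km A by (intro borel_measurable_times borel_measurable_indicator) auto
      show "AE x in circ_m. 0 \<le> indicator A x * k x" by (rule AE_I2) (simp add: k_def)
    qed
    also have "(\<integral>\<^sup>+x. ennreal (indicator A x * k x) \<partial>circ_m) = (\<integral>\<^sup>+x. f x * indicator A x \<partial>circ_m)"
      by (rule nn_integral_cong_AE) (use kf in \<open>eventually_elim, simp add: indicator_def\<close>)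
    also have "\<dots> = ennreal (P A)" using fA[OF A] .
    finally show ?thesis using P_nonneg[of A] by simp
  qed
  then show ?thesis using kint by blast
qed

end

lemma signed_fa_neg: "signed_fa \<nu> K \<Longrightarrow> signed_fa (\<lambda>A. - \<nu> A) K"
  unfolding signed_fa_def by auto

context signed_fa begin

lemma jordan: assumes A: "A \<in> sets circ_m"
  shows "\<nu> A = P A - signed_fa.P (\<lambda>A. - \<nu> A) A"
proof -
  interpret neg: signed_fa "\<lambda>A. - \<nu> A" K by (rule signed_fa_neg) (rule signed_fa_axioms)
  have split: "\<nu> A = \<nu> B + \<nu> (A - B)" if "B \<in> sets circ_m" "B \<subseteq> A" for B
  proof -
    have "A = B \<union> (A - B)" using that by auto
    then show ?thesis using add[of B "A - B"] that A by (metis Diff_disjoint sets.Diff)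
  qed
  have "P A - \<nu> A \<le> neg.P A"
  proof -
    have "P A \<le> neg.P A + \<nu> A"
    proof (rule P_least)
      fix B assume B: "B \<in> sets circ_m" "B \<subseteq> A"
      have "- \<nu> (A - B) \<le> neg.P A" by (rule neg.P_upper) (use A B in auto)
      then show "\<nu> B \<le> neg.P A + \<nu> A" using split[OF B] by simp
    qed
    then show ?thesis by simp
  qed
  moreover have "neg.P A \<le> P A - \<nu> A"
  proof (rule neg.P_least)
    fix C assume C: "C \<in> sets circ_m" "C \<subseteq> A"
    have "\<nu> (A - C) \<le> P A" by (rule P_upper) (use A C in auto)
    then show "- \<nu> C \<le> P A - \<nu> A" using split[OF C] by simp
  qed
  ultimately show ?thesis by simp
qed

lemma density_rep:
  "\<exists>k. integrable circ_m k \<and> (\<forall>A\<in>sets circ_m. \<nu> A = (\<integral>x. indicator A x * k x \<partial>circ_m))"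
proof -
  interpret neg: signed_fa "\<lambda>A. - \<nu> A" K by (rule signed_fa_neg) (rule signed_fa_axioms)
  obtain k1 where k1: "integrable circ_m k1" "\<forall>A\<in>sets circ_m. P A = (\<integral>x. indicator A x * k1 x \<partial>circ_m)"
    using P_density by blast
  obtain k2 where k2: "integrable circ_m k2" "\<forall>A\<in>sets circ_m. neg.P A = (\<integral>x. indicator A x * k2 x \<partial>circ_m)"
    using neg.P_density by blast
  have "\<nu> A = (\<integral>x. indicator A x * (k1 x - k2 x) \<partial>circ_m)" if A: "A \<in> sets circ_m" for A
  proof -
    have i1: "integrable circ_m (\<lambda>x. indicator A x * k1 x)"
      using integrable_real_mult_indicator[OF A k1(1)] by (simp add: mult.commute)
    have i2: "integrable circ_m (\<lambda>x. indicator A x * k2 x)"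
      using integrable_real_mult_indicator[OF A k2(1)] by (simp add: mult.commute)
    have "(\<integral>x. indicator A x * (k1 x - k2 x) \<partial>circ_m) =
        (\<integral>x. indicator A x * k1 x - indicator A x * k2 x \<partial>circ_m)"
      by (simp add: right_diff_distrib)
    also have "\<dots> = (\<integral>x. indicator A x * k1 x \<partial>circ_m) - (\<integral>x. indicator A x * k2 x \<partial>circ_m)"
      by (rule Bochner_Integration.integral_diff[OF i1 i2])
    finally show ?thesis using jordan[OF A] k1(2) k2(2) A by simp
  qed
  moreover have "integrable circ_m (\<lambda>x. k1 x - k2 x)" using k1(1) k2(1) by simp
  ultimately show ?thesis by blast
qed

end


lemma int_bdd:
  fixes k u :: "real \<Rightarrow> real"
  assumes k: "integrable circ_m k" and u: "u \<in> borel_measurable circ_m"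
    and B: "\<And>x. x \<in> {0..1} \<Longrightarrow> \<bar>u x\<bar> \<le> B"
  shows "integrable circ_m (\<lambda>x. u x * k x)"
proof (rule Bochner_Integration.integrable_bound[where f="\<lambda>x. \<bar>B\<bar> * k x"])
  show "integrable circ_m (\<lambda>x. \<bar>B\<bar> * k x)" using k by simp
  show "(\<lambda>x. u x * k x) \<in> borel_measurable circ_m" using u k by (simp add: borel_measurable_integrable)
  show "AE x in circ_m. norm (u x * k x) \<le> norm (\<bar>B\<bar> * k x)"
  proof (rule AE_I2)
    fix x assume "x \<in> space circ_m"
    then have "\<bar>u x\<bar> \<le> \<bar>B\<bar>" using B by force
    then show "norm (u x * k x) \<le> norm (\<bar>B\<bar> * k x)" by (simp add: abs_mult mult_right_mono)
  qed
qed

lemma small_zero: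
  fixes d C :: real
  assumes "\<And>n::nat. \<bar>d\<bar> \<le> C / real (Suc n)"
  shows "d = 0"
proof (rule ccontr)
  assume "d \<noteq> 0"
  then have dp: "\<bar>d\<bar> > 0" by simp
  obtain n :: nat where n: "C / \<bar>d\<bar> < real n" using reals_Archimedean2 by blast
  have "C < real n * \<bar>d\<bar>" using n dp by (simp add: field_simps)
  also have "\<dots> \<le> real (Suc n) * \<bar>d\<bar>" using dp by (simp add: mult_right_mono)
  finally have "C / real (Suc n) < \<bar>d\<bar>" by (simp add: field_simps)
  then show False using assms[of n] by simp
qed

lemma Linf_ind: "A \<in> sets circ_m \<Longrightarrow> (\<lambda>x. c * complex_of_real (indicator A x)) \<in> Linf"
  by (rule Linf_I[of _ "norm c"]) (auto simp: indicator_def borel_measurable_indicator)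

lemma Linf_real: "u \<in> borel_measurable circ_m \<Longrightarrow> (\<And>x. x \<in> {0..1} \<Longrightarrow> \<bar>u x\<bar> \<le> B) \<Longrightarrow>
   (\<lambda>x. c * complex_of_real (u x)) \<in> Linf"
  by (rule Linf_I[of _ "norm c * B"]) (auto simp: norm_mult intro!: mult_left_mono)

locale psi_fun =
  fixes \<alpha> :: "(real \<Rightarrow> complex) \<Rightarrow> real" and \<psi> :: "(real \<Rightarrow> complex) \<Rightarrow> real"
  assumes G: "gauge_norm_dom \<alpha>" and GC: "gauge_continuous \<alpha>"
    and padd: "\<And>f g. f \<in> Linf \<Longrightarrow> g \<in> Linf \<Longrightarrow> \<psi> (fadd f g) = \<psi> f + \<psi> g"
    and psc: "\<And>f t. f \<in> Linf \<Longrightarrow> \<psi> (fsc t f) = t * \<psi> f"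
    and pb: "\<And>f. f \<in> Linf \<Longrightarrow> \<bar>\<psi> f\<bar> \<le> \<alpha> f"
begin

lemma psi_diff: "f \<in> Linf \<Longrightarrow> g \<in> Linf \<Longrightarrow> \<psi> (\<lambda>x. f x - g x) = \<psi> f - \<psi> g"
proof -
  assume f: "f \<in> Linf" and g: "g \<in> Linf"
  have e: "(\<lambda>x. f x - g x) = fadd f (fsc (-1) g)" by (simp add: fun_eq_iff)
  have "\<psi> (fadd f (fsc (-1) g)) = \<psi> f + \<psi> (fsc (-1) g)" by (rule padd[OF f Linf_cmult[OF g]])
  moreover have "\<psi> (fsc (-1) g) = -1 * \<psi> g" by (rule psc[OF g])
  ultimately have "\<psi> (fadd f (fsc (-1) g)) = \<psi> f - \<psi> g" by linarith
  then show ?thesis using e by metis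
qed

lemma psi_ae: "f \<in> Linf \<Longrightarrow> g \<in> Linf \<Longrightarrow> (AE x in circ_m. f x = g x) \<Longrightarrow> \<psi> f = \<psi> g"
proof -
  assume f: "f \<in> Linf" and g: "g \<in> Linf" and ae: "AE x in circ_m. f x = g x"
  have d: "(\<lambda>x. f x - g x) \<in> Linf" using Linf_diff[OF f g] .
  have "\<alpha> (\<lambda>x. f x - g x) = 0" using a_zero[OF G d] ae by (simp add: eventually_mono)
  then have "\<bar>\<psi> (\<lambda>x. f x - g x)\<bar> \<le> 0" using pb[OF d] by simp
  then show ?thesis using psi_diff[OF f g] by simp
qed

lemma psi_sp: "f \<in> Linf \<Longrightarrow> g \<in> Linf \<Longrightarrow> (\<And>x. x \<in> {0..1} \<Longrightarrow> f x = g x) \<Longrightarrow> \<psi> f = \<psi> g"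
  by (rule psi_ae) (auto intro: AE_I2)

lemma psi_sum:
  assumes "finite R" "\<And>r. r \<in> R \<Longrightarrow> g r \<in> Linf"
  shows "(\<lambda>x. \<Sum>r\<in>R. complex_of_real (w r) * g r x) \<in> Linf \<and>
    \<psi> (\<lambda>x. \<Sum>r\<in>R. complex_of_real (w r) * g r x) = (\<Sum>r\<in>R. w r * \<psi> (g r))"
  using assms
proof (induction R rule: finite_induct)
  case empty
  have "\<psi> (fsc 0 (\<lambda>_. 0)) = 0" using psc[OF Linf_const, of 0 0] by simp
  then show ?case using Linf_const[of 0] by simp
next
  case (insert a R)
  have ga: "g a \<in> Linf" using insert by simp
  have IH: "(\<lambda>x. \<Sum>r\<in>R. complex_of_real (w r) * g r x) \<in> Linf"
    "\<psi> (\<lambda>x. \<Sum>r\<in>R. complex_of_real (w r) * g r x) = (\<Sum>r\<in>R. w r * \<psi> (g r))"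
    using insert by auto
  have eq: "(\<lambda>x. \<Sum>r\<in>insert a R. complex_of_real (w r) * g r x) =
      fadd (fsc (w a) (g a)) (\<lambda>x. \<Sum>r\<in>R. complex_of_real (w r) * g r x)"
    using insert(1,2) by (simp add: fun_eq_iff)
  show ?case unfolding eq
    using Linf_add[OF Linf_cmult[OF ga] IH(1)] padd[OF Linf_cmult[OF ga] IH(1)] psc[OF ga] IH(2) insert(1,2)
    by simp
qed

lemma rep_c:
  assumes c: "norm c = 1"
  shows "\<exists>k. integrable circ_m k \<and> (\<forall>u B. u \<in> borel_measurable circ_m \<longrightarrow> (\<forall>x\<in>{0..1}. \<bar>u x\<bar> \<le> B) \<longrightarrow>
     \<psi> (\<lambda>x. c * complex_of_real (u x)) = (\<integral>x. u x * k x \<partial>circ_m))"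
proof -
  define \<nu> where "\<nu> A = \<psi> (\<lambda>x. c * complex_of_real (indicator A x))" for A
  have indeq: "(\<lambda>x. complex_of_real (indicator A x)) = indicator A" for A
    by (auto simp: fun_eq_iff indicator_def)
  have sfa: "signed_fa \<nu> 1"
  proof
    fix A B assume A: "A \<in> sets circ_m" and B: "B \<in> sets circ_m" and d: "A \<inter> B = {}"
    have "(\<lambda>x. c * complex_of_real (indicator (A \<union> B) x)) =
       fadd (\<lambda>x. c * complex_of_real (indicator A x)) (\<lambda>x. c * complex_of_real (indicator B x))"
      using d by (auto simp: fun_eq_iff indicator_def distrib_left)
    then show "\<nu> (A \<union> B) = \<nu> A + \<nu> B" unfolding \<nu>_def using padd[OF Linf_ind[OF A] Linf_ind[OF B]] by simp
  next
    fix A assume A: "A \<in> sets circ_m"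
    have "\<bar>\<nu> A\<bar> \<le> \<alpha> (\<lambda>x. c * complex_of_real (indicator A x))" unfolding \<nu>_def using pb[OF Linf_ind[OF A]] .
    also have "\<dots> \<le> 1" by (rule a_const_bound[OF G Linf_ind[OF A]]) (simp add: norm_mult c indicator_def)
    finally show "\<bar>\<nu> A\<bar> \<le> 1" .
  next
    fix \<epsilon> :: real assume e: "\<epsilon> > 0"
    obtain \<delta> where d: "\<delta> > 0" "\<forall>E\<in>sets circ_m. measure circ_m E < \<delta> \<longrightarrow> \<alpha> (indicator E) < \<epsilon>"
      using GC e unfolding gauge_continuous_def by blast
    have "\<bar>\<nu> A\<bar> < \<epsilon>" if A: "A \<in> sets circ_m" "measure circ_m A < \<delta>" for A
    proof -
      have "\<bar>\<nu> A\<bar> \<le> \<alpha> (\<lambda>x. c * complex_of_real (indicator A x))" unfolding \<nu>_def using pb[OF Linf_ind[OF A(1)]] .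
      also have "\<dots> = \<alpha> (\<lambda>x. complex_of_real (indicator A x))"
        using a_scale[OF G Linf_ind[OF A(1), of 1], of c] c by simp
      also have "\<dots> < \<epsilon>" unfolding indeq using d A by blast
      finally show ?thesis .
    qed
    then show "\<exists>\<delta>>0. \<forall>A\<in>sets circ_m. measure circ_m A < \<delta> \<longrightarrow> \<bar>\<nu> A\<bar> < \<epsilon>" using d(1) by blast
  qed
  obtain k where k: "integrable circ_m k" "\<forall>A\<in>sets circ_m. \<nu> A = (\<integral>x. indicator A x * k x \<partial>circ_m)"
    using signed_fa.density_rep[OF sfa] by blast
  have gL: "(\<lambda>x. c * complex_of_real (indicator A x)) \<in> Linf" if "A \<in> sets circ_m" for A
    using Linf_ind[OF that] .
  have simple: "\<psi> (\<lambda>x. c * complex_of_real (v x)) = (\<integral>x. v x * k x \<partial>circ_m)"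
    if vm: "v \<in> borel_measurable circ_m" and vf: "finite (v ` {0..1})" for v
  proof -
    define R where "R = v ` {0..1}"
    have fR: "finite R" using vf R_def by simp
    define Ar where "Ar r = v -` {r} \<inter> {0..1}" for r
    have Arm: "Ar r \<in> sets circ_m" for r unfolding Ar_def using borel_measurable_vimage[OF vm, of r] by simp
    have vsum: "v x = (\<Sum>r\<in>R. r * indicator (Ar r) x)" if xI: "x \<in> {0..1}" for x
    proof -
      have "(\<Sum>r\<in>R. r * indicator (Ar r) x) = (\<Sum>r\<in>R. if r = v x then r else 0)"
        by (rule sum.cong) (use xI in \<open>auto simp: Ar_def indicator_def\<close>)
      also have "\<dots> = v x" using fR xI unfolding R_def by (simp add: sum.delta')
      finally show ?thesis by simp
    qed
    have vB: "\<bar>v x\<bar> \<le> (\<Sum>r\<in>R. \<bar>r\<bar>)" if x: "x \<in> {0..1}" for x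
    proof -
      have "v x \<in> R" using x R_def by blast
      then show ?thesis using member_le_sum[of "v x" R "\<lambda>r. \<bar>r\<bar>"] fR by auto
    qed
    have PS: "(\<lambda>x. \<Sum>r\<in>R. complex_of_real r * (c * complex_of_real (indicator (Ar r) x))) \<in> Linf \<and>
       \<psi> (\<lambda>x. \<Sum>r\<in>R. complex_of_real r * (c * complex_of_real (indicator (Ar r) x))) =
       (\<Sum>r\<in>R. r * \<psi> (\<lambda>x. c * complex_of_real (indicator (Ar r) x)))"
      using psi_sum[OF fR, of "\<lambda>r x. c * complex_of_real (indicator (Ar r) x)" "\<lambda>r. r"] gL[OF Arm] by blast
    have "\<psi> (\<lambda>x. c * complex_of_real (v x)) =
        \<psi> (\<lambda>x. \<Sum>r\<in>R. complex_of_real r * (c * complex_of_real (indicator (Ar r) x)))"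
    proof (rule psi_sp)
      show "(\<lambda>x. c * complex_of_real (v x)) \<in> Linf" using Linf_real[OF vm vB] .
      show "(\<lambda>x. \<Sum>r\<in>R. complex_of_real r * (c * complex_of_real (indicator (Ar r) x))) \<in> Linf" using PS by blast
      fix x :: real assume x: "x \<in> {0..1}"
      have "c * complex_of_real (v x) = c * complex_of_real (\<Sum>r\<in>R. r * indicator (Ar r) x)"
        using vsum[OF x] by simp
      also have "\<dots> = (\<Sum>r\<in>R. complex_of_real r * (c * complex_of_real (indicator (Ar r) x)))"
        by (simp add: sum_distrib_left algebra_simps)
      finally show "c * complex_of_real (v x) = (\<Sum>r\<in>R. complex_of_real r * (c * complex_of_real (indicator (Ar r) x)))" .
    qed
    also have "\<dots> = (\<Sum>r\<in>R. r * \<nu> (Ar r))" using PS unfolding \<nu>_def by simp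
    also have "\<dots> = (\<Sum>r\<in>R. r * (\<integral>x. indicator (Ar r) x * k x \<partial>circ_m))" using k(2) Arm by simp
    also have "\<dots> = (\<Sum>r\<in>R. (\<integral>x. r * (indicator (Ar r) x * k x) \<partial>circ_m))" by simp
    also have "\<dots> = (\<integral>x. (\<Sum>r\<in>R. r * (indicator (Ar r) x * k x)) \<partial>circ_m)"
    proof (rule Bochner_Integration.integral_sum[symmetric])
      fix r assume "r \<in> R"
      show "integrable circ_m (\<lambda>x. r * (indicator (Ar r) x * k x))"
        using integrable_real_mult_indicator[OF Arm k(1)] by (simp add: mult.commute)
    qed
    also have "\<dots> = (\<integral>x. v x * k x \<partial>circ_m)"
    proof (rule Bochner_Integration.integral_cong[OF refl])
      fix x assume "x \<in> space circ_m"
      then have x: "x \<in> {0..1}" by simp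
      show "(\<Sum>r\<in>R. r * (indicator (Ar r) x * k x)) = v x * k x"
        unfolding vsum[OF x] by (simp add: sum_distrib_right mult.assoc)
    qed
    finally show ?thesis .
  qed
  have "\<psi> (\<lambda>x. c * complex_of_real (u x)) = (\<integral>x. u x * k x \<partial>circ_m)"
    if um: "u \<in> borel_measurable circ_m" and uB: "\<forall>x\<in>{0..1}. \<bar>u x\<bar> \<le> B" for u B
  proof -
    define d where "d = \<psi> (\<lambda>x. c * complex_of_real (u x)) - (\<integral>x. u x * k x \<partial>circ_m)"
    have uL: "(\<lambda>x. c * complex_of_real (u x)) \<in> Linf" using Linf_real[OF um] uB by blast
    have ui: "integrable circ_m (\<lambda>x. u x * k x)" using int_bdd[OF k(1) um] uB by blast
    have "\<bar>d\<bar> \<le> (1 + (\<integral>x. \<bar>k x\<bar> \<partial>circ_m)) / real (Suc n)" for n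
    proof -
      define N where "N = real (Suc n)"
      have N: "N \<ge> 1" unfolding N_def by simp
      define v where "v x = real_of_int \<lfloor>N * u x\<rfloor> / N" for x
      have vm: "v \<in> borel_measurable circ_m" unfolding v_def
        using measurable_compose[OF _ borel_measurable_real_floor, of "\<lambda>x. N * u x"] um by simp
      have fl: "\<lfloor>N * u x\<rfloor> \<in> {\<lfloor>- (N * B)\<rfloor>..\<lfloor>N * B\<rfloor>}" if x: "x \<in> {0..1}" for x
      proof -
        have "\<bar>u x\<bar> \<le> B" using uB x by blast
        then have "u x \<le> B" "- u x \<le> B" by (auto simp: abs_le_iff)
        then have "N * u x \<le> N * B" "N * (- u x) \<le> N * B" using N
          by (intro mult_left_mono; simp)+
        then have "- (N * B) \<le> N * u x" "N * u x \<le> N * B" by simp_all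
        then show ?thesis by (auto intro: floor_mono)
      qed
      have vf: "finite (v ` {0..1})"
      proof (rule finite_subset)
        show "v ` {0..1} \<subseteq> (\<lambda>j. real_of_int j / N) ` {\<lfloor>- (N * B)\<rfloor>..\<lfloor>N * B\<rfloor>}"
          unfolding v_def using fl by blast
      qed simp
      have uv: "\<bar>u x - v x\<bar> \<le> 1 / N" if x: "x \<in> {0..1}" for x
      proof -
        have "real_of_int \<lfloor>N * u x\<rfloor> \<le> N * u x" "N * u x < real_of_int \<lfloor>N * u x\<rfloor> + 1"
          by linarith+
        then have "0 \<le> N * u x - real_of_int \<lfloor>N * u x\<rfloor>" "N * u x - real_of_int \<lfloor>N * u x\<rfloor> \<le> 1" by linarith+
        moreover have "u x - v x = (N * u x - real_of_int \<lfloor>N * u x\<rfloor>) / N"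
          unfolding v_def using N by (simp add: diff_divide_distrib)
        ultimately have "0 \<le> u x - v x" "u x - v x \<le> 1 / N" using N
          by (simp_all add: divide_right_mono)
        then show ?thesis by simp
      qed
      have vB: "\<bar>v x\<bar> \<le> B + 1" if x: "x \<in> {0..1}" for x
        using uv[OF x] uB x N by (smt (verit, best) divide_le_eq_1)
      have vL: "(\<lambda>x. c * complex_of_real (v x)) \<in> Linf" using Linf_real[OF vm vB] .
      have vi: "integrable circ_m (\<lambda>x. v x * k x)" using int_bdd[OF k(1) vm vB] .
      have e1: "\<bar>\<psi> (\<lambda>x. c * complex_of_real (u x)) - \<psi> (\<lambda>x. c * complex_of_real (v x))\<bar> \<le> 1 / N"
      proof -
        have dL: "(\<lambda>x. c * complex_of_real (u x) - c * complex_of_real (v x)) \<in> Linf"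
          using Linf_diff[OF uL vL] .
        have "\<bar>\<psi> (\<lambda>x. c * complex_of_real (u x)) - \<psi> (\<lambda>x. c * complex_of_real (v x))\<bar>
           = \<bar>\<psi> (\<lambda>x. c * complex_of_real (u x) - c * complex_of_real (v x))\<bar>"
          using psi_diff[OF uL vL] by simp
        also have "\<dots> \<le> \<alpha> (\<lambda>x. c * complex_of_real (u x) - c * complex_of_real (v x))" using pb[OF dL] .
        also have "\<dots> \<le> 1 / N"
        proof (rule a_const_bound[OF G dL])
          fix x :: real assume x: "x \<in> {0..1}"
          have "norm (c * complex_of_real (u x) - c * complex_of_real (v x)) = \<bar>u x - v x\<bar>"
            by (simp add: right_diff_distrib[symmetric] norm_mult c flip: of_real_diff)
          then show "norm (c * complex_of_real (u x) - c * complex_of_real (v x)) \<le> 1 / N" using uv[OF x] by simp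
        qed
        finally show ?thesis .
      qed
      have e2: "\<bar>(\<integral>x. u x * k x \<partial>circ_m) - (\<integral>x. v x * k x \<partial>circ_m)\<bar> \<le> (\<integral>x. \<bar>k x\<bar> \<partial>circ_m) / N"
      proof -
        have "(\<integral>x. u x * k x \<partial>circ_m) - (\<integral>x. v x * k x \<partial>circ_m) = (\<integral>x. u x * k x - v x * k x \<partial>circ_m)"
          using Bochner_Integration.integral_diff[OF ui vi] by simp
        also have "\<bar>\<dots>\<bar> \<le> (\<integral>x. \<bar>k x\<bar> / N \<partial>circ_m)"
        proof (rule integral_abs_bound_integral)
          show "integrable circ_m (\<lambda>x. u x * k x - v x * k x)" using ui vi by simp
          show "integrable circ_m (\<lambda>x. \<bar>k x\<bar> / N)" using k(1) by simp
          fix x assume "x \<in> space circ_m"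
          then have x: "x \<in> {0..1}" by simp
          have "\<bar>u x * k x - v x * k x\<bar> = \<bar>u x - v x\<bar> * \<bar>k x\<bar>" by (simp add: left_diff_distrib[symmetric] abs_mult)
          also have "\<dots> \<le> (1 / N) * \<bar>k x\<bar>" using uv[OF x] by (rule mult_right_mono) simp
          finally show "\<bar>u x * k x - v x * k x\<bar> \<le> \<bar>k x\<bar> / N" by simp
        qed
        also have "\<dots> = (\<integral>x. \<bar>k x\<bar> \<partial>circ_m) / N" by simp
        finally show ?thesis .
      qed
      have "\<psi> (\<lambda>x. c * complex_of_real (v x)) = (\<integral>x. v x * k x \<partial>circ_m)" using simple[OF vm vf] .
      then have "\<bar>d\<bar> \<le> 1 / N + (\<integral>x. \<bar>k x\<bar> \<partial>circ_m) / N" unfolding d_def using e1 e2 by linarith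
      then show ?thesis unfolding N_def by (simp add: add_divide_distrib)
    qed
    then have "d = 0" by (rule small_zero)
    then show ?thesis unfolding d_def by simp
  qed
  then show ?thesis using k(1) by blast
qed

end


context psi_fun begin

lemma psi_rep: "\<exists>K. integrable circ_m K \<and> (\<forall>h\<in>Linf. \<psi> h = Re (\<integral>x. h x * K x \<partial>circ_m))"
proof -
  obtain k1 where k1: "integrable circ_m k1" "\<And>u B. u \<in> borel_measurable circ_m \<Longrightarrow> (\<forall>x\<in>{0..1}. \<bar>u x\<bar> \<le> B) \<Longrightarrow>
     \<psi> (\<lambda>x. 1 * complex_of_real (u x)) = (\<integral>x. u x * k1 x \<partial>circ_m)"
    using rep_c[of 1] by auto
  obtain k2 where k2: "integrable circ_m k2" "\<And>u B. u \<in> borel_measurable circ_m \<Longrightarrow> (\<forall>x\<in>{0..1}. \<bar>u x\<bar> \<le> B) \<Longrightarrow>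
     \<psi> (\<lambda>x. \<i> * complex_of_real (u x)) = (\<integral>x. u x * k2 x \<partial>circ_m)"
    using rep_c[of \<i>] by auto
  define K where "K x = complex_of_real (k1 x) - \<i> * complex_of_real (k2 x)" for x
  have Kint: "integrable circ_m K" unfolding K_def using k1(1) k2(1) by simp
  have Km: "K \<in> borel_measurable circ_m" using Kint by (rule borel_measurable_integrable)
  have "\<psi> h = Re (\<integral>x. h x * K x \<partial>circ_m)" if hL: "h \<in> Linf" for h
  proof -
    obtain C where C: "AE x in circ_m. norm (h x) \<le> C" using hL unfolding Linf_def by auto
    have hm: "h \<in> borel_measurable circ_m" using Linf_meas[OF hL] .
    define h' where "h' x = (if norm (h x) \<le> C then h x else 0)" for x
    have h'm: "h' \<in> borel_measurable circ_m" unfolding h'_def using hm by measurable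
    have h'B: "norm (h' x) \<le> \<bar>C\<bar>" for x unfolding h'_def by auto
    have ae: "AE x in circ_m. h x = h' x" using C by eventually_elim (simp add: h'_def)
    have h'L: "h' \<in> Linf" by (rule Linf_I[OF h'm h'B])
    have ReB: "\<forall>x\<in>{0..1}. \<bar>Re (h' x)\<bar> \<le> \<bar>C\<bar>" using h'B abs_Re_le_cmod order_trans by blast
    have ImB: "\<forall>x\<in>{0..1}. \<bar>Im (h' x)\<bar> \<le> \<bar>C\<bar>" using h'B abs_Im_le_cmod order_trans by blast
    have Rem: "(\<lambda>x. Re (h' x)) \<in> borel_measurable circ_m" using h'm by simp
    have Imm: "(\<lambda>x. Im (h' x)) \<in> borel_measurable circ_m" using h'm by simp
    have L1: "(\<lambda>x. 1 * complex_of_real (Re (h' x))) \<in> Linf" using Linf_real[OF Rem] ReB by blast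
    have L2: "(\<lambda>x. \<i> * complex_of_real (Im (h' x))) \<in> Linf" using Linf_real[OF Imm] ImB by blast
    have "\<psi> h = \<psi> h'" by (rule psi_ae[OF hL h'L ae])
    also have "h' = fadd (\<lambda>x. 1 * complex_of_real (Re (h' x))) (\<lambda>x. \<i> * complex_of_real (Im (h' x)))"
      by (simp add: fun_eq_iff complex_eq[symmetric])
    also have "\<psi> \<dots> = \<psi> (\<lambda>x. 1 * complex_of_real (Re (h' x))) + \<psi> (\<lambda>x. \<i> * complex_of_real (Im (h' x)))"
      by (rule padd[OF L1 L2])
    also have "\<dots> = (\<integral>x. Re (h' x) * k1 x \<partial>circ_m) + (\<integral>x. Im (h' x) * k2 x \<partial>circ_m)"
      using k1(2)[OF Rem ReB] k2(2)[OF Imm ImB] by simp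
    also have "\<dots> = (\<integral>x. Re (h' x) * k1 x + Im (h' x) * k2 x \<partial>circ_m)"
    proof (rule Bochner_Integration.integral_add[symmetric])
      show "integrable circ_m (\<lambda>x. Re (h' x) * k1 x)" by (rule int_bdd[OF k1(1) Rem]) (use ReB in auto)
      show "integrable circ_m (\<lambda>x. Im (h' x) * k2 x)" by (rule int_bdd[OF k2(1) Imm]) (use ImB in auto)
    qed
    also have "\<dots> = (\<integral>x. Re (h' x * K x) \<partial>circ_m)"
      by (rule Bochner_Integration.integral_cong) (auto simp: K_def)
    also have "\<dots> = Re (\<integral>x. h' x * K x \<partial>circ_m)"
    proof (rule integral_Re)
      show "integrable circ_m (\<lambda>x. h' x * K x)"
      proof (rule Bochner_Integration.integrable_bound[where f="\<lambda>x. complex_of_real \<bar>C\<bar> * K x"])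
        show "integrable circ_m (\<lambda>x. complex_of_real \<bar>C\<bar> * K x)" using Kint by simp
        show "(\<lambda>x. h' x * K x) \<in> borel_measurable circ_m" using h'm Km by simp
        show "AE x in circ_m. norm (h' x * K x) \<le> norm (complex_of_real \<bar>C\<bar> * K x)"
          by (rule AE_I2) (simp add: norm_mult mult_right_mono h'B)
      qed
    qed
    also have "(\<integral>x. h' x * K x \<partial>circ_m) = (\<integral>x. h x * K x \<partial>circ_m)"
      by (rule integral_cong_AE) (use h'm hm Km ae in \<open>auto elim: eventually_mono\<close>)
    finally show ?thesis .
  qed
  then show ?thesis using Kint by blast
qed

end


lemma Linf_int: "f \<in> Linf \<Longrightarrow> integrable circ_m f"
proof -
  assume f: "f \<in> Linf"
  obtain C where C: "AE x in circ_m. norm (f x) \<le> C" using f unfolding Linf_def by auto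
  show ?thesis by (rule finite_measure.integrable_const_bound[OF circ_finite C Linf_meas[OF f]])
qed

lemma Linf_cis: "f \<in> Linf \<Longrightarrow> (\<lambda>t. f t * cis (2 * pi * real n * t)) \<in> Linf"
proof -
  assume f: "f \<in> Linf"
  have "(\<lambda>t. cis (2 * pi * real n * t) * f t) \<in> Linf"
  proof (rule Linf_bmult[OF f, of _ 1])
    show "(\<lambda>t. cis (2 * pi * real n * t)) \<in> borel_measurable circ_m"
      by (rule continuous_imp_measurable_on_sets_lebesgue) (auto intro!: continuous_intros)
  qed auto
  then show ?thesis by (simp add: mult.commute)
qed

lemma Hinf_Linf: "Hinf \<subseteq> Linf" unfolding Hinf_def by auto

lemma Hinf_add: assumes f: "f \<in> Hinf" and g: "g \<in> Hinf" shows "fadd f g \<in> Hinf"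
proof -
  have fL: "f \<in> Linf" and gL: "g \<in> Linf" using f g Hinf_Linf by auto
  have "(\<integral>t. (f t + g t) * cis (2 * pi * real n * t) \<partial>circ_m) = 0" if n: "n \<ge> 1" for n :: nat
  proof -
    have "(\<integral>t. (f t + g t) * cis (2 * pi * real n * t) \<partial>circ_m) =
        (\<integral>t. f t * cis (2 * pi * real n * t) + g t * cis (2 * pi * real n * t) \<partial>circ_m)"
      by (simp add: distrib_right)
    also have "\<dots> = (\<integral>t. f t * cis (2 * pi * real n * t) \<partial>circ_m) + (\<integral>t. g t * cis (2 * pi * real n * t) \<partial>circ_m)"
      by (rule Bochner_Integration.integral_add) (use Linf_int Linf_cis fL gL in auto)
    also have "\<dots> = 0" using f g n unfolding Hinf_def by simp
    finally show ?thesis .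
  qed
  then show ?thesis unfolding Hinf_def using Linf_add[OF fL gL] by simp
qed

lemma Hinf_cmult: assumes f: "f \<in> Hinf" shows "(\<lambda>x. c * f x) \<in> Hinf"
proof -
  have fL: "f \<in> Linf" using f Hinf_Linf by auto
  have "(\<integral>t. (c * f t) * cis (2 * pi * real n * t) \<partial>circ_m) = 0" if n: "n \<ge> 1" for n :: nat
  proof -
    have "(\<integral>t. (c * f t) * cis (2 * pi * real n * t) \<partial>circ_m) =
        (\<integral>t. c * (f t * cis (2 * pi * real n * t)) \<partial>circ_m)"
      by (simp add: mult.assoc)
    also have "\<dots> = c * (\<integral>t. f t * cis (2 * pi * real n * t) \<partial>circ_m)"
      by (rule integral_mult_right_zero)
    also have "\<dots> = 0" using f n unfolding Hinf_def by simp
    finally show ?thesis .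
  qed
  then show ?thesis unfolding Hinf_def using Linf_cmult[OF fL] by simp
qed

lemma Hinf_zero: "(\<lambda>_. 0) \<in> Hinf"
  unfolding Hinf_def using Linf_const[of 0] by simp

context
  fixes \<alpha> :: "(real \<Rightarrow> complex) \<Rightarrow> real"
  assumes G: "gauge_norm_dom \<alpha>"
begin

lemma ae_le: assumes h: "h \<in> Linf" shows "alpha_ext \<alpha> h \<le> ereal (\<alpha> h)"
  unfolding alpha_ext_def
proof (rule Sup_least)
  fix y assume "y \<in> {ereal (\<alpha> (\<lambda>x. complex_of_real (s x))) |s. simple_function circ_m s \<and>
        (\<forall>x\<in>space circ_m. 0 \<le> s x \<and> s x \<le> norm (h x))}"
  then obtain s where y: "y = ereal (\<alpha> (\<lambda>x. complex_of_real (s x)))" and s: "simple_function circ_m s"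
    and sb: "\<forall>x\<in>space circ_m. 0 \<le> s x \<and> s x \<le> norm (h x)" by blast
  obtain C where C: "AE x in circ_m. norm (h x) \<le> C" using h unfolding Linf_def by auto
  have sm: "s \<in> borel_measurable circ_m" using borel_measurable_simple_function[OF s] .
  have sp: "AE x in circ_m. x \<in> space circ_m" by (rule AE_I2)
  have "AE x in circ_m. norm (complex_of_real (s x)) \<le> C"
    using C sp
  proof eventually_elim
    case (elim x)
    then have "0 \<le> s x" "s x \<le> norm (h x)" using sb by auto
    then show ?case using elim(1) by simp
  qed
  then have sL: "(\<lambda>x. complex_of_real (s x)) \<in> Linf" unfolding Linf_def using sm by auto
  have "\<alpha> (\<lambda>x. complex_of_real (s x)) \<le> \<alpha> h" by (rule a_mono[OF G sL h]) (use sb in auto)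
  then show "y \<le> ereal (\<alpha> h)" using y by simp
qed

lemma a_zero_fun: "\<alpha> (\<lambda>_. 0) = 0"
  using a_scale[OF G Linf_const[of 1], of 0] by simp

lemma dist_pos:
  assumes CS: "closed_subspace_Halpha \<alpha> M" and f: "f \<in> Hinf" and fM: "f \<notin> M"
  shows "\<exists>\<epsilon>>0. \<forall>g\<in>M \<inter> Hinf. \<epsilon> \<le> \<alpha> (\<lambda>x. f x - g x)"
proof -
  have fL: "f \<in> Linf" using f Hinf_Linf by auto
  have fH: "f \<in> Halpha \<alpha>"
    unfolding Halpha_def Lalpha_def
  proof (intro CollectI conjI allI impI)
    show "f \<in> borel_measurable circ_m" using Linf_meas[OF fL] .
    have "ereal (\<alpha> f) < \<infinity>" by simp
    then show "alpha_ext \<alpha> f < \<infinity>" by (rule le_less_trans[OF ae_le[OF fL]])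
    fix \<epsilon> :: real assume e: "\<epsilon> > 0"
    have "alpha_ext \<alpha> (\<lambda>x. f x - f x) \<le> ereal (\<alpha> (\<lambda>x. f x - f x))" using ae_le[OF Linf_diff[OF fL fL]] .
    also have "\<alpha> (\<lambda>x. f x - f x) = 0" using a_zero_fun by simp
    finally have "alpha_ext \<alpha> (\<lambda>x. f x - f x) < ereal \<epsilon>" using e by (simp add: le_less_trans)
    then show "\<exists>h\<in>Hinf. alpha_ext \<alpha> (\<lambda>x. f x - h x) < ereal \<epsilon>" using f by blast
  qed
  have cl: "\<forall>f\<in>Halpha \<alpha>. (\<forall>\<epsilon>>0. \<exists>g\<in>M. alpha_ext \<alpha> (\<lambda>x. f x - g x) < ereal \<epsilon>) \<longrightarrow> f \<in> M"
    using CS unfolding closed_subspace_Halpha_def by blast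
  then obtain \<epsilon> where e: "\<epsilon> > 0" and eg: "\<forall>g\<in>M. \<not> alpha_ext \<alpha> (\<lambda>x. f x - g x) < ereal \<epsilon>"
    using fH fM by blast
  have "\<epsilon> \<le> \<alpha> (\<lambda>x. f x - g x)" if g: "g \<in> M \<inter> Hinf" for g
  proof -
    have gL: "g \<in> Linf" using g Hinf_Linf by auto
    have "ereal \<epsilon> \<le> alpha_ext \<alpha> (\<lambda>x. f x - g x)" using eg g by (simp add: not_less)
    also have "\<dots> \<le> ereal (\<alpha> (\<lambda>x. f x - g x))" using ae_le[OF Linf_diff[OF fL gL]] .
    finally show ?thesis by simp
  qed
  then show ?thesis using e by blast
qed

end


lemma separate:
  fixes \<alpha> :: "(real \<Rightarrow> complex) \<Rightarrow> real" and M :: "(real \<Rightarrow> complex) set"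
  assumes G: "gauge_norm_dom \<alpha>" and GC: "gauge_continuous \<alpha>"
    and CS: "closed_subspace_Halpha \<alpha> M" and f: "f \<in> Hinf" and fM: "f \<notin> M"
  shows "\<exists>\<psi>. psi_fun \<alpha> \<psi> \<and> \<psi> f > 0 \<and> (\<forall>m\<in>M \<inter> Hinf. \<psi> m = 0)"
proof -
  obtain \<epsilon> where e: "\<epsilon> > 0" and eg: "\<forall>g\<in>M \<inter> Hinf. \<epsilon> \<le> \<alpha> (\<lambda>x. f x - g x)"
    using dist_pos[OF G CS f fM] by blast
  have Madd: "\<And>g h. g \<in> M \<Longrightarrow> h \<in> M \<Longrightarrow> fadd g h \<in> M"
    and Mc: "\<And>g c. g \<in> M \<Longrightarrow> (\<lambda>x. c * g x) \<in> M"
    and M0: "(\<lambda>_. 0) \<in> M"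
    using CS unfolding closed_subspace_Halpha_def by blast+
  define V where "V = M \<inter> Hinf"
  have Vadd: "\<And>g h. g \<in> V \<Longrightarrow> h \<in> V \<Longrightarrow> fadd g h \<in> V"
    unfolding V_def using Madd Hinf_add by blast
  have Vc: "\<And>g c. g \<in> V \<Longrightarrow> (\<lambda>x. c * g x) \<in> V"
    unfolding V_def using Mc Hinf_cmult by blast
  have V0: "(\<lambda>_. 0) \<in> V" unfolding V_def using M0 Hinf_zero by blast
  have VL: "\<And>g. g \<in> V \<Longrightarrow> g \<in> Linf" unfolding V_def using Hinf_Linf by blast
  have fL: "f \<in> Linf" using f Hinf_Linf by blast
  have fV: "f \<notin> V" unfolding V_def using fM by blast
  define H0 where "H0 = {(fadd m (fsc t f), t * \<epsilon>) | m t. m \<in> V}"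
  have H0I: "(fadd m (fsc t f), t * \<epsilon>) \<in> H0" if "m \<in> V" for m t
    unfolding H0_def using that by blast
  have H0E: "\<exists>m t. m \<in> V \<and> x = fadd m (fsc t f) \<and> a = t * \<epsilon>" if "(x, a) \<in> H0" for x a
    using that unfolding H0_def by blast
  have good0: "hbgood Linf \<alpha> H0 H0"
  proof (rule hbgoodI)
    show "H0 \<subseteq> H0" by simp
  next
    fix x a b assume xa: "(x,a) \<in> H0" and xb: "(x,b) \<in> H0"
    obtain m1 t1 where 1: "m1 \<in> V" "x = fadd m1 (fsc t1 f)" "a = t1 * \<epsilon>" using H0E[OF xa] by blast
    obtain m2 t2 where 2: "m2 \<in> V" "x = fadd m2 (fsc t2 f)" "b = t2 * \<epsilon>" using H0E[OF xb] by blast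
    have xeq: "fadd m1 (fsc t1 f) = fadd m2 (fsc t2 f)" using 1(2) 2(2) by simp
    have "t1 = t2"
    proof (rule ccontr)
      assume ne: "t1 \<noteq> t2"
      have "(\<lambda>s. complex_of_real (1/(t2 - t1)) * fadd m1 (\<lambda>s. (-1) * m2 s) s) \<in> V"
        by (rule Vc, rule Vadd, rule 1(1), rule Vc, rule 2(1))
      moreover have "(\<lambda>s. complex_of_real (1/(t2 - t1)) * fadd m1 (\<lambda>s. (-1) * m2 s) s) = f"
      proof
        fix s
        have "m1 s + t1 * f s = m2 s + t2 * f s" using fun_cong[OF xeq, of s] by simp
        then have "m1 s + (-1) * m2 s = complex_of_real (t2 - t1) * f s" by (simp add: algebra_simps)
        then have "complex_of_real (1/(t2 - t1)) * fadd m1 (\<lambda>s. (-1) * m2 s) s =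
            complex_of_real (1/(t2 - t1)) * (complex_of_real (t2 - t1) * f s)" by simp
        also have "\<dots> = f s" using ne by (simp add: cancel_of_real)
        finally show "complex_of_real (1/(t2 - t1)) * fadd m1 (\<lambda>s. (-1) * m2 s) s = f s" .
      qed
      ultimately show False using fV by simp
    qed
    then show "a = b" using 1(3) 2(3) by simp
  next
    fix x a assume xa: "(x,a) \<in> H0"
    obtain m t where 1: "m \<in> V" "x = fadd m (fsc t f)" "a = t * \<epsilon>" using H0E[OF xa] by blast
    show "x \<in> Linf" unfolding 1(2) using Linf_add[OF VL[OF 1(1)] Linf_cmult[OF fL]] .
    show "a \<le> \<alpha> x"
    proof (cases "t > 0")
      case False
      then have "a \<le> 0" using 1(3) e by (simp add: mult_nonpos_nonneg)
      also have "0 \<le> \<alpha> x" by (rule a_nonneg[OF G]) (simp add: 1(2) Linf_add[OF VL[OF 1(1)] Linf_cmult[OF fL]])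
      finally show ?thesis .
    next
      case True
      define m' where "m' = (\<lambda>s. complex_of_real (-1/t) * m s)"
      have m'V: "m' \<in> V" unfolding m'_def by (rule Vc[OF 1(1)])
      have dL: "(\<lambda>s. f s - m' s) \<in> Linf" using Linf_diff[OF fL VL[OF m'V]] .
      have "x = fsc t (\<lambda>s. f s - m' s)"
      proof
        fix s
        have hyp: "complex_of_real t * (complex_of_real (-1/t) * m s) = - m s"
          using True cancel_of_real(2)[of t "- m s"] by simp
        have "fsc t (\<lambda>s. f s - m' s) s = complex_of_real t * f s - complex_of_real t * (complex_of_real (-1/t) * m s)"
          unfolding m'_def by (simp only: right_diff_distrib)
        also have "\<dots> = complex_of_real t * f s + m s" unfolding hyp by simp
        also have "\<dots> = x s" unfolding 1(2) by (simp add: add.commute)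
        finally show "x s = fsc t (\<lambda>s. f s - m' s) s" by (rule sym)
      qed
      then have "\<alpha> x = t * \<alpha> (\<lambda>s. f s - m' s)" using a_scale[OF G dL, of "complex_of_real t"] True by simp
      moreover have "\<epsilon> \<le> \<alpha> (\<lambda>s. f s - m' s)" using eg m'V unfolding V_def by blast
      ultimately show ?thesis using 1(3) True by simp
    qed
  next
    fix x a y b assume xa: "(x,a) \<in> H0" and yb: "(y,b) \<in> H0"
    obtain m1 t1 where 1: "m1 \<in> V" "x = fadd m1 (fsc t1 f)" "a = t1 * \<epsilon>" using H0E[OF xa] by blast
    obtain m2 t2 where 2: "m2 \<in> V" "y = fadd m2 (fsc t2 f)" "b = t2 * \<epsilon>" using H0E[OF yb] by blast
    have "(fadd (fadd m1 m2) (fsc (t1 + t2) f), (t1 + t2) * \<epsilon>) \<in> H0" by (rule H0I[OF Vadd[OF 1(1) 2(1)]])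
    moreover have "fadd (fadd m1 m2) (fsc (t1 + t2) f) = fadd x y" unfolding 1(2) 2(2)
      by (simp add: fun_eq_iff algebra_simps)
    moreover have "(t1 + t2) * \<epsilon> = a + b" using 1(3) 2(3) by (simp add: algebra_simps)
    ultimately show "(fadd x y, a + b) \<in> H0" by simp
  next
    fix x a s assume xa: "(x,a) \<in> H0"
    obtain m t where 1: "m \<in> V" "x = fadd m (fsc t f)" "a = t * \<epsilon>" using H0E[OF xa] by blast
    have "(fadd (\<lambda>r. complex_of_real s * m r) (fsc (s * t) f), (s * t) * \<epsilon>) \<in> H0" by (rule H0I[OF Vc[OF 1(1)]])
    moreover have "fadd (\<lambda>r. complex_of_real s * m r) (fsc (s * t) f) = fsc s x" unfolding 1(2)
      by (simp add: fun_eq_iff algebra_simps)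
    moreover have "(s * t) * \<epsilon> = s * a" using 1(3) by simp
    ultimately show "(fsc s x, s * a) \<in> H0" by simp
  qed
  have ne: "H0 \<noteq> {}" using H0I[OF V0] by blast
  have p2: "\<alpha> (fsc t g) = t * \<alpha> g" if "g \<in> Linf" "t \<ge> 0" for g t
    using a_scale[OF G that(1), of "complex_of_real t"] that(2) by simp
  obtain \<psi> where padd: "\<forall>g\<in>Linf. \<forall>h\<in>Linf. \<psi> (fadd g h) = \<psi> g + \<psi> h"
    and psc: "\<forall>g\<in>Linf. \<forall>t. \<psi> (fsc t g) = t * \<psi> g"
    and ple: "\<forall>g\<in>Linf. \<psi> g \<le> \<alpha> g"
    and pH: "\<forall>x a. (x,a) \<in> H0 \<longrightarrow> \<psi> x = a"
    using hahn_banach_fun[where E=Linf and p=\<alpha>, OF Linf_add Linf_cmult a_tri[OF G] p2 good0 ne] by blast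
  have pf: "psi_fun \<alpha> \<psi>"
  proof
    show "gauge_norm_dom \<alpha>" by (rule G)
    show "gauge_continuous \<alpha>" by (rule GC)
    show "\<And>g h. g \<in> Linf \<Longrightarrow> h \<in> Linf \<Longrightarrow> \<psi> (fadd g h) = \<psi> g + \<psi> h" using padd by blast
    show "\<And>g t. g \<in> Linf \<Longrightarrow> \<psi> (fsc t g) = t * \<psi> g" using psc by blast
    fix g assume g: "g \<in> Linf"
    have "\<psi> (fsc (-1) g) = (-1) * \<psi> g" using psc g by blast
    then have "- \<psi> g = \<psi> (fsc (-1) g)" by linarith
    also have "\<dots> \<le> \<alpha> (fsc (-1) g)" using ple Linf_cmult[OF g] by blast
    also have "\<dots> = \<alpha> g" using a_scale[OF G g, of "complex_of_real (-1)"] by simp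
    finally show "\<bar>\<psi> g\<bar> \<le> \<alpha> g" using ple g by (simp add: abs_le_iff)
  qed
  have "\<psi> (fadd (\<lambda>_. 0) (fsc 1 f)) = 1 * \<epsilon>" using pH H0I[OF V0, of 1] by blast
  moreover have "fadd (\<lambda>_. 0) (fsc 1 f) = f" by simp
  ultimately have "\<psi> f = \<epsilon>" by simp
  moreover have "\<psi> m = 0" if m: "m \<in> M \<inter> Hinf" for m
  proof -
    have mV: "m \<in> V" using m V_def by simp
    have "\<psi> (fadd m (fsc 0 f)) = 0 * \<epsilon>" using pH H0I[OF mV, of 0] by blast
    moreover have "fadd m (fsc 0 f) = m" by simp
    ultimately show ?thesis by simp
  qed
  ultimately show ?thesis using pf e by auto
qed

theorem lemma3p9:
  fixes \<alpha> :: "(real \<Rightarrow> complex) \<Rightarrow> real" and M :: "(real \<Rightarrow> complex) set"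
  assumes "gauge_norm_dom \<alpha>" and "gauge_continuous \<alpha>"
    and "closed_subspace_Halpha \<alpha> M"
  shows "closedin (subtopology weak_star Hinf) (M \<inter> Hinf)"
proof -
  define SB where "SB = {{f \<in> Linf. (\<integral>x. f x * g x \<partial>circ_m) \<in> U} | g U. integrable circ_m g \<and> open (U :: complex set)}"
  have SBsub: "S \<subseteq> Linf" if "S \<in> SB" for S
    using that unfolding SB_def by auto
  have LSB: "Linf \<in> SB"
  proof -
    have "{f \<in> Linf. (\<integral>x. f x * (\<lambda>_. 0) x \<partial>circ_m) \<in> (UNIV :: complex set)} \<in> SB"
      unfolding SB_def by (rule CollectI, rule exI[of _ "\<lambda>_. 0"], rule exI[of _ UNIV]) (simp only: integrable_zero open_UNIV simp_thms)
    moreover have "{f \<in> Linf. (\<integral>x. f x * (\<lambda>_. 0) x \<partial>circ_m) \<in> (UNIV :: complex set)} = Linf" by auto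
    ultimately show ?thesis by simp
  qed
  have topw: "topspace weak_star = Linf"
    unfolding weak_star_def topology_generated_by_topspace SB_def[symmetric]
    using SBsub LSB by blast
  have sub: "topspace (subtopology weak_star Hinf) = Hinf"
    using topw Hinf_Linf by auto
  have "openin (subtopology weak_star Hinf) (Hinf - M \<inter> Hinf)"
  proof (subst openin_subopen, intro ballI)
    fix f assume fin: "f \<in> Hinf - M \<inter> Hinf"
    then have f: "f \<in> Hinf" and fM: "f \<notin> M" by auto
    obtain \<psi> where pf: "psi_fun \<alpha> \<psi>" and pos: "\<psi> f > 0" and zero: "\<forall>m\<in>M \<inter> Hinf. \<psi> m = 0"
      using separate[OF assms f fM] by blast
    obtain K where Kint: "integrable circ_m K" and rep: "\<forall>h\<in>Linf. \<psi> h = Re (\<integral>x. h x * K x \<partial>circ_m)"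
      using psi_fun.psi_rep[OF pf] by blast
    define T' where "T' = {h \<in> Linf. (\<integral>x. h x * K x \<partial>circ_m) \<in> {z. 0 < Re z}}"
    have "openin weak_star T'" unfolding weak_star_def SB_def[symmetric]
    proof (rule topology_generated_by_Basis)
      show "T' \<in> SB"
        unfolding T'_def SB_def
        by (rule CollectI, rule exI[of _ K], rule exI[of _ "{z. 0 < Re z}"]) (simp only: Kint open_halfspace_Re_gt simp_thms)
    qed
    then have op: "openin (subtopology weak_star Hinf) (Hinf \<inter> T')" by (rule openin_subtopology_Int2)
    have fL: "f \<in> Linf" using f Hinf_Linf by blast
    have "f \<in> Hinf \<inter> T'" unfolding T'_def using f fL rep pos by auto
    moreover have "Hinf \<inter> T' \<subseteq> Hinf - M \<inter> Hinf"
    proof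
      fix h assume h: "h \<in> Hinf \<inter> T'"
      then have hL: "h \<in> Linf" and hp: "0 < Re (\<integral>x. h x * K x \<partial>circ_m)" unfolding T'_def by auto
      have "\<psi> h > 0" using rep hL hp by simp
      then have "h \<notin> M" using zero h by auto
      then show "h \<in> Hinf - M \<inter> Hinf" using h by auto
    qed
    ultimately show "\<exists>T. openin (subtopology weak_star Hinf) T \<and> f \<in> T \<and> T \<subseteq> Hinf - M \<inter> Hinf"
      using op by blast
  qed
  then show ?thesis unfolding closedin_def sub by auto
qed


end
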